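(* Consider the map $q:\mathbb{G}\to[0,1)$ defined by $q(z_1+z_2,z_1z_2)=|\varphi_{z_1}(z_2)|=\left|\frac{z_1-z_2}{1-\overline{z_1}z_2}\right|$ for $z_1,z_2\in\mathbb{D}$, and let $\Delta=\{(2z,z^2):z\in\mathbb{D}\}$. Then: (1) $q|_{\mathbb{G}-\Delta}:\mathbb{G}-\Delta\to(0,1)$ is a submersion; (2) $q$ defines a three-dimensional foliation $\mathscr{L}$ of $\mathbb{G}-\Delta$ whose leaves are $\mathscr{L}_a=q^{-1}\{a\}$, $a\in(0,1)$; (3) each leaf $\mathscr{L}_a$ is a real $3$-manifold; (4) for each $a\in(0,1)$, $\mathscr{L}_a=\mathscr{F}_a/\mathbb{Z}_2$, where $\mathscr{F}_a=\{(z_1,z_2)\in\mathbb{D}\times\mathbb{D}: |\varphi_{z_1}(z_2)|=a\}$ and $\mathbb{Z}_2=\{\pm1\}$ acts on $\mathscr{F}_a$ by $(-1)\cdot(z_1,z_2)=(z_2,z_1)$ (the quotient map being $(z_1,z_2)\mapsto(z_1+z_2,z_1z_2)$).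
   Context: $\mathbb{D}$ is the open unit disc in $\mathbb{C}$; $\mathbb{G}=\{(z_1+z_2,z_1z_2):z_1,z_2\in\mathbb{D}\}$ is the symmetrized bidisc, regarded as a real $4$-manifold (open subset of $\mathbb{C}^2\cong\mathbb{R}^4$). The value $q(s,p)$ does not depend on the ordering of $z_1,z_2$. For $\alpha\in\mathbb{D}$, $\varphi_\alpha(z)=\frac{\alpha-z}{1-\overline{\alpha}z}$. *)

theory Defs
  imports "HOL-Analysis.Analysis"
begin

definition unit_disc :: "complex set" where
  "unit_disc = ball 0 1"

definition moeb :: "complex \<Rightarrow> complex \<Rightarrow> complex" where
  "moeb \<alpha> z = (\<alpha> - z) / (1 - cnj \<alpha> * z)"

definition symm :: "complex \<times> complex \<Rightarrow> complex \<times> complex" where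
  "symm w = (fst w + snd w, fst w * snd w)"

definition symG :: "(complex \<times> complex) set" where
  "symG = {(z1 + z2, z1 * z2) | z1 z2. z1 \<in> unit_disc \<and> z2 \<in> unit_disc}"

definition royal :: "(complex \<times> complex) set" where
  "royal = {(2 * z, z ^ 2) | z. z \<in> unit_disc}"

text \<open>q(z1+z2, z1 z2) = |phi_{z1}(z2)|; well defined on G (independent of ordering).\<close>
definition qmap :: "complex \<times> complex \<Rightarrow> real" where
  "qmap x = (THE a. \<exists>z1 z2. z1 \<in> unit_disc \<and> z2 \<in> unit_disc \<and>
                          x = (z1 + z2, z1 * z2) \<and> a = cmod (moeb z1 z2))"

definition Fa :: "real \<Rightarrow> (complex \<times> complex) set" where
  "Fa a = {(z1, z2). z1 \<in> unit_disc \<and> z2 \<in> unit_disc \<and> cmod (moeb z1 z2) = a}"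

text \<open>C-infinity on an open set: all iterated partial derivatives exist and are continuous.\<close>
definition smooth_on :: "'a::euclidean_space set \<Rightarrow> ('a \<Rightarrow> 'b::real_normed_vector) \<Rightarrow> bool" where
  "smooth_on S f \<longleftrightarrow>
     (\<exists>F. f \<in> F \<and>
        (\<forall>g\<in>F. continuous_on S g \<and>
           (\<forall>i\<in>Basis. \<exists>g'\<in>F. \<forall>x\<in>S.
               ((\<lambda>t. g (x + t *\<^sub>R i)) has_vector_derivative g' x) (at 0))))"

end

theory Submission
  imports Defs
begin
definition sfam :: "'a::euclidean_space set \<Rightarrow> ('a \<Rightarrow> 'b::real_normed_vector) set \<Rightarrow> bool" where
 "sfam S F \<longleftrightarrow> (\<forall>g\<in>F. continuous_on S g \<and> (\<forall>i\<in>Basis. \<exists>g'\<in>F. \<forall>x\<in>S.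
      ((\<lambda>t. g (x + t *\<^sub>R i)) has_vector_derivative g' x) (at 0)))"

lemma smooth_on_sfam: "smooth_on S f \<longleftrightarrow> (\<exists>F. f \<in> F \<and> sfam S F)"
  by (auto simp: smooth_on_def sfam_def)

lemma smooth_onI: "f \<in> F \<Longrightarrow> sfam S F \<Longrightarrow> smooth_on S f"
  by (auto simp: smooth_on_sfam)

lemma sfam_Sm: "sfam S {f. smooth_on S f}"
  unfolding sfam_def
proof safe
  fix g assume "smooth_on S g"
  then obtain F where F: "g \<in> F" "sfam S F" by (auto simp: smooth_on_sfam)
  then show "continuous_on S g" by (auto simp: sfam_def)
  fix i :: 'a assume i: "i \<in> Basis"
  with F obtain g' where "g' \<in> F" "\<forall>x\<in>S. ((\<lambda>t. g (x + t *\<^sub>R i)) has_vector_derivative g' x) (at 0)"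
    unfolding sfam_def by blast
  with F show "\<exists>g'\<in>{f. smooth_on S f}. \<forall>x\<in>S. ((\<lambda>t. g (x + t *\<^sub>R i)) has_vector_derivative g' x) (at 0)"
    by (auto intro: smooth_onI)
qed

lemma smooth_cont: "smooth_on S f \<Longrightarrow> continuous_on S f"
  using sfam_Sm[of S] unfolding sfam_def by auto

lemma smooth_deriv: "smooth_on S f \<Longrightarrow> i \<in> Basis \<Longrightarrow>
   \<exists>g'. smooth_on S g' \<and> (\<forall>x\<in>S. ((\<lambda>t. f (x + t *\<^sub>R i)) has_vector_derivative g' x) (at 0))"
  using sfam_Sm[of S] unfolding sfam_def by auto

lemma smooth_mono: "smooth_on S f \<Longrightarrow> T \<subseteq> S \<Longrightarrow> smooth_on T f"
  unfolding smooth_on_def by (meson continuous_on_subset subsetD)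

inductive_set alg :: "('a \<Rightarrow> 'b::real_normed_algebra) set \<Rightarrow> ('a \<Rightarrow> 'b) set" for B where
  base: "f \<in> B \<Longrightarrow> f \<in> alg B"
| add: "f \<in> alg B \<Longrightarrow> g \<in> alg B \<Longrightarrow> (\<lambda>x. f x + g x) \<in> alg B"
| mult: "f \<in> alg B \<Longrightarrow> g \<in> alg B \<Longrightarrow> (\<lambda>x. f x * g x) \<in> alg B"

lemma alg_sfam:
  fixes B :: "('a::euclidean_space \<Rightarrow> 'b::real_normed_algebra) set"
  assumes "\<forall>g\<in>B. continuous_on S g \<and> (\<forall>i\<in>Basis. \<exists>g'\<in>alg B. \<forall>x\<in>S.
      ((\<lambda>t. g (x + t *\<^sub>R i)) has_vector_derivative g' x) (at 0))"
  shows "sfam S (alg B)"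
  unfolding sfam_def
proof
  fix f assume "f \<in> alg B"
  then show "continuous_on S f \<and> (\<forall>i\<in>Basis. \<exists>g'\<in>alg B. \<forall>x\<in>S.
      ((\<lambda>t. f (x + t *\<^sub>R i)) has_vector_derivative g' x) (at 0))"
  proof induction
    case (base f)
    then show ?case using assms by auto
  next
    case (add f g)
    show ?case
    proof (intro conjI ballI)
      show "continuous_on S (\<lambda>x. f x + g x)" using add by (auto intro: continuous_on_add)
      fix i :: 'a assume i: "i \<in> Basis"
      from add i obtain f' g' where f': "f' \<in> alg B" "\<forall>x\<in>S. ((\<lambda>t. f (x + t *\<^sub>R i)) has_vector_derivative f' x) (at 0)"
        and g': "g' \<in> alg B" "\<forall>x\<in>S. ((\<lambda>t. g (x + t *\<^sub>R i)) has_vector_derivative g' x) (at 0)"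
        by blast
      show "\<exists>h\<in>alg B. \<forall>x\<in>S. ((\<lambda>t. f (x + t *\<^sub>R i) + g (x + t *\<^sub>R i)) has_vector_derivative h x) (at 0)"
        by (rule bexI[of _ "\<lambda>x. f' x + g' x"]) (use f' g' in \<open>auto intro: has_vector_derivative_add alg.add\<close>)
    qed
  next
    case (mult f g)
    show ?case
    proof (intro conjI ballI)
      show "continuous_on S (\<lambda>x. f x * g x)" using mult by (auto intro: continuous_on_mult)
      fix i :: 'a assume i: "i \<in> Basis"
      from mult i obtain f' g' where f': "f' \<in> alg B" "\<forall>x\<in>S. ((\<lambda>t. f (x + t *\<^sub>R i)) has_vector_derivative f' x) (at 0)"
        and g': "g' \<in> alg B" "\<forall>x\<in>S. ((\<lambda>t. g (x + t *\<^sub>R i)) has_vector_derivative g' x) (at 0)"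
        by blast
      show "\<exists>h\<in>alg B. \<forall>x\<in>S. ((\<lambda>t. f (x + t *\<^sub>R i) * g (x + t *\<^sub>R i)) has_vector_derivative h x) (at 0)"
      proof (rule bexI[of _ "\<lambda>x. f x * g' x + f' x * g x"], intro ballI)
        fix x assume "x \<in> S"
        from has_vector_derivative_mult[OF f'(2)[rule_format, OF this] g'(2)[rule_format, OF this]]
        show "((\<lambda>t. f (x + t *\<^sub>R i) * g (x + t *\<^sub>R i)) has_vector_derivative f x * g' x + f' x * g x) (at 0)"
          by simp
      qed (use f' g' mult in \<open>auto intro: alg.add alg.mult\<close>)
    qed
  qed
qed

lemma smooth_add:
  fixes S :: "'a::euclidean_space set" and f g :: "'a \<Rightarrow> 'b::real_normed_vector"
  assumes "smooth_on S f" "smooth_on S g"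
  shows "smooth_on S (\<lambda>x. f x + g x)"
proof -
  let ?F = "{f. smooth_on S f} \<union> {h. \<exists>f g. smooth_on S f \<and> smooth_on S g \<and> h = (\<lambda>x. f x + g x)}"
  have "sfam S ?F"
    unfolding sfam_def
  proof (intro ballI conjI)
    fix h assume "h \<in> ?F"
    then show "continuous_on S h" by (auto intro!: continuous_on_add dest!: smooth_cont)
    fix i :: 'a assume i: "i \<in> Basis"
    show "\<exists>g'\<in>?F. \<forall>x\<in>S. ((\<lambda>t. h (x + t *\<^sub>R i)) has_vector_derivative g' x) (at 0)"
    proof (cases "smooth_on S h")
      case True
      then show ?thesis using smooth_deriv[OF True i] by blast
    next
      case False
      with \<open>h \<in> ?F\<close> obtain f g where fg: "smooth_on S f" "smooth_on S g" "h = (\<lambda>x. f x + g x)" by blast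
      obtain f' where f': "smooth_on S f'" "\<forall>x\<in>S. ((\<lambda>t. f (x + t *\<^sub>R i)) has_vector_derivative f' x) (at 0)"
        using smooth_deriv[OF fg(1) i] by blast
      obtain g' where g': "smooth_on S g'" "\<forall>x\<in>S. ((\<lambda>t. g (x + t *\<^sub>R i)) has_vector_derivative g' x) (at 0)"
        using smooth_deriv[OF fg(2) i] by blast
      show ?thesis
        by (rule bexI[of _ "\<lambda>x. f' x + g' x"]) (use f' g' fg in \<open>auto intro: has_vector_derivative_add\<close>)
    qed
  qed
  then show ?thesis by (rule smooth_onI[rotated]) (use assms in blast)
qed

lemma smooth_mult:
  fixes f g :: "'a::euclidean_space \<Rightarrow> 'b::real_normed_algebra"
  assumes "smooth_on S f" "smooth_on S g"
  shows "smooth_on S (\<lambda>x. f x * g x)"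
proof -
  have "sfam S (alg {f. smooth_on S f})"
    apply (rule alg_sfam)
    using smooth_deriv by (fastforce intro: alg.base smooth_cont)
  moreover have "(\<lambda>x. f x * g x) \<in> alg {f. smooth_on S f}"
    by (rule alg.mult; rule alg.base) (use assms in auto)
  ultimately show ?thesis by (rule smooth_onI[rotated])
qed

lemma smooth_const: "smooth_on (S::'a::euclidean_space set) (\<lambda>x. c)"
proof -
  have "sfam S {\<lambda>x. c, \<lambda>x. 0}" unfolding sfam_def by auto
  then show ?thesis by (rule smooth_onI[rotated]) auto
qed

lemma smooth_linear_comp:
  fixes S :: "'a::euclidean_space set" and f :: "'a \<Rightarrow> 'b::real_normed_vector" and L :: "'b \<Rightarrow> 'c::real_normed_vector"
  assumes L: "bounded_linear L" and f: "smooth_on S f"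
  shows "smooth_on S (\<lambda>x. L (f x))"
proof -
  let ?F = "{h. \<exists>g. smooth_on S g \<and> h = (\<lambda>x. L (g x))}"
  have "sfam S ?F"
    unfolding sfam_def
  proof (intro ballI conjI)
    fix h assume "h \<in> ?F"
    then obtain g where g: "smooth_on S g" "h = (\<lambda>x. L (g x))" by auto
    show "continuous_on S h" unfolding g(2)
      by (intro continuous_on_compose2[OF linear_continuous_on[OF L] smooth_cont[OF g(1)]]) auto
    fix i :: 'a assume i: "i \<in> Basis"
    obtain g' where g': "smooth_on S g'" "\<forall>x\<in>S. ((\<lambda>t. g (x + t *\<^sub>R i)) has_vector_derivative g' x) (at 0)"
      using smooth_deriv[OF g(1) i] by blast
    show "\<exists>g'\<in>?F. \<forall>x\<in>S. ((\<lambda>t. h (x + t *\<^sub>R i)) has_vector_derivative g' x) (at 0)"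
      by (rule bexI[of _ "\<lambda>x. L (g' x)"]) (use g' g in \<open>auto intro: bounded_linear.has_vector_derivative[OF L]\<close>)
  qed
  then show ?thesis by (rule smooth_onI[rotated]) (use f in blast)
qed

lemma smooth_linear:
  fixes S :: "'a::euclidean_space set" and L :: "'a \<Rightarrow> 'c::real_normed_vector"
  assumes L: "bounded_linear L"
  shows "smooth_on S L"
proof -
  let ?F = "insert L (range (\<lambda>c. \<lambda>x. c))"
  have "sfam S ?F"
    unfolding sfam_def
  proof (intro ballI conjI)
    fix h assume "h \<in> ?F"
    then show "continuous_on S h" using linear_continuous_on[OF L] by auto
    fix i :: 'a assume i: "i \<in> Basis"
    show "\<exists>g'\<in>?F. \<forall>x\<in>S. ((\<lambda>t. h (x + t *\<^sub>R i)) has_vector_derivative g' x) (at 0)"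
    proof (cases "h = L")
      case True
      have "((\<lambda>t. L (x + t *\<^sub>R i)) has_vector_derivative L i) (at 0)" for x
      proof -
        have "((\<lambda>t. x + t *\<^sub>R i) has_vector_derivative i) (at 0)"
          by (auto intro!: derivative_eq_intros)
        then show ?thesis by (rule bounded_linear.has_vector_derivative[OF L])
      qed
      then show ?thesis using True by auto
    next
      case False
      then obtain c where "h = (\<lambda>x. c)" using \<open>h \<in> ?F\<close> by auto
      then show ?thesis by (intro bexI[of _ "\<lambda>x. 0"]) auto
    qed
  qed
  then show ?thesis by (rule smooth_onI[rotated]) auto
qed

lemma smooth_powr:
  fixes S :: "'a::euclidean_space set" and f :: "'a \<Rightarrow> real"
  assumes f: "smooth_on S f" and pos: "\<And>x. x \<in> S \<Longrightarrow> f x > 0"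
  shows "smooth_on S (\<lambda>x. f x powr a)"
proof -
  define H where "H k y = (\<Prod>j<k. (a - real j)) * y powr (a - real k)" for k y
  have DH: "(H k has_real_derivative H (Suc k) y) (at y)" if "y > 0" for k y
  proof -
    have "((\<lambda>y. (\<Prod>j<k. (a - real j)) * y powr (a - real k)) has_real_derivative
        (\<Prod>j<k. (a - real j)) * ((a - real k) * y powr (a - real k - 1))) (at y)"
      by (intro DERIV_cmult has_real_derivative_powr that)
    then show ?thesis unfolding H_def by (simp add: algebra_simps)
  qed
  let ?B = "{g. smooth_on S g} \<union> range (\<lambda>k. \<lambda>x. H k (f x))"
  have "sfam S (alg ?B)"
  proof (rule alg_sfam, intro ballI conjI)
    fix g assume "g \<in> ?B"
    then show "continuous_on S g"
    proof
      assume "g \<in> {g. smooth_on S g}" then show ?thesis by (auto intro: smooth_cont)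
    next
      assume "g \<in> range (\<lambda>k x. H k (f x))"
      then obtain k where k: "g = (\<lambda>x. H k (f x))" by auto
      show ?thesis unfolding k H_def
        using smooth_cont[OF f] pos by (auto intro!: continuous_intros) (metis less_irrefl)
    qed
    fix i :: 'a assume i: "i \<in> Basis"
    show "\<exists>g'\<in>alg ?B. \<forall>x\<in>S. ((\<lambda>t. g (x + t *\<^sub>R i)) has_vector_derivative g' x) (at 0)"
    proof (cases "smooth_on S g")
      case True
      then show ?thesis using smooth_deriv[OF True i] by (blast intro: alg.base)
    next
      case False
      with \<open>g \<in> ?B\<close> obtain k where k: "g = (\<lambda>x. H k (f x))" by auto
      obtain f' where f': "smooth_on S f'" "\<forall>x\<in>S. ((\<lambda>t. f (x + t *\<^sub>R i)) has_vector_derivative f' x) (at 0)"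
        using smooth_deriv[OF f i] by blast
      show ?thesis
      proof (rule bexI[of _ "\<lambda>x. H (Suc k) (f x) * f' x"], intro ballI)
        fix x assume x: "x \<in> S"
        have "((\<lambda>t. f (x + t *\<^sub>R i)) has_real_derivative f' x) (at 0)"
          using f'(2) x by (simp add: has_real_derivative_iff_has_vector_derivative)
        from DERIV_chain2[OF DH[of "f (x + 0 *\<^sub>R i)"] this]
        have "((\<lambda>t. H k (f (x + t *\<^sub>R i))) has_real_derivative H (Suc k) (f x) * f' x) (at 0)"
          using pos[OF x] by simp
        then show "((\<lambda>t. g (x + t *\<^sub>R i)) has_vector_derivative H (Suc k) (f x) * f' x) (at 0)"
          unfolding k by (simp add: has_real_derivative_iff_has_vector_derivative)
      next
        show "(\<lambda>x. H (Suc k) (f x) * f' x) \<in> alg ?B"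
          by (rule alg.mult; rule alg.base) (use f' in auto)
      qed
    qed
  qed
  moreover have "(\<lambda>x. H 0 (f x)) \<in> alg ?B" by (rule alg.base) auto
  moreover have "(\<lambda>x. H 0 (f x)) = (\<lambda>x. f x powr a)" by (simp add: H_def)
  ultimately show ?thesis by (metis smooth_onI)
qed

lemma smooth_cong:
  fixes S :: "'a::euclidean_space set" and f g :: "'a \<Rightarrow> 'b::real_normed_vector"
  assumes S: "open S" and f: "smooth_on S f" and eq: "\<And>x. x \<in> S \<Longrightarrow> g x = f x"
  shows "smooth_on S g"
proof -
  let ?F = "insert g {f. smooth_on S f}"
  have "sfam S ?F"
    unfolding sfam_def
  proof (intro ballI conjI)
    fix h assume "h \<in> ?F"
    moreover have "continuous_on S g"
      by (rule continuous_on_eq[OF smooth_cont[OF f]]) (use eq in auto)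
    ultimately show "continuous_on S h" by (auto intro: smooth_cont)
    fix i :: 'a assume i: "i \<in> Basis"
    show "\<exists>g'\<in>?F. \<forall>x\<in>S. ((\<lambda>t. h (x + t *\<^sub>R i)) has_vector_derivative g' x) (at 0)"
    proof (cases "h = g")
      case False
      then have "smooth_on S h" using \<open>h \<in> ?F\<close> by auto
      then show ?thesis using smooth_deriv[OF _ i] by blast
    next
      case True
      obtain f' where f': "smooth_on S f'" "\<forall>x\<in>S. ((\<lambda>t. f (x + t *\<^sub>R i)) has_vector_derivative f' x) (at 0)"
        using smooth_deriv[OF f i] by blast
      show ?thesis
      proof (rule bexI[of _ f'], intro ballI)
        fix x assume x: "x \<in> S"
        let ?T = "{t::real. x + t *\<^sub>R i \<in> S}"
        have "open ((\<lambda>t::real. x + t *\<^sub>R i) -` S \<inter> UNIV)"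
          using continuous_on_open_vimage[of UNIV "\<lambda>t::real. x + t *\<^sub>R i"] S
          by (auto intro!: continuous_intros)
        then have "open ?T" by (simp add: vimage_def)
        then show "((\<lambda>t. h (x + t *\<^sub>R i)) has_vector_derivative f' x) (at 0)"
          using has_vector_derivative_transform_within_open[OF f'(2)[rule_format, OF x], of ?T]
          using x eq True by auto
      qed (use f' in auto)
    qed
  qed
  then show ?thesis by (rule smooth_onI[rotated]) auto
qed

lemma smooth_sqrt:
  fixes S :: "'a::euclidean_space set" and f :: "'a \<Rightarrow> real"
  assumes "open S" "smooth_on S f" "\<And>x. x \<in> S \<Longrightarrow> f x > 0"
  shows "smooth_on S (\<lambda>x. sqrt (f x))"
  by (rule smooth_cong[OF assms(1) smooth_powr[OF assms(2,3), of "1/2"]])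
     (use assms(3) in \<open>auto simp: powr_half_sqrt less_imp_le abs_of_pos\<close>)

lemma smooth_inverse:
  fixes S :: "'a::euclidean_space set" and f :: "'a \<Rightarrow> real"
  assumes "open S" "smooth_on S f" "\<And>x. x \<in> S \<Longrightarrow> f x > 0"
  shows "smooth_on S (\<lambda>x. inverse (f x))"
  by (rule smooth_cong[OF assms(1) smooth_powr[OF assms(2,3), of "-1"]])
     (use assms(3) in \<open>auto simp: powr_minus intro!: abs_of_pos[symmetric]\<close>)

lemma smooth_scaleR:
  fixes S :: "'a::euclidean_space set" and f :: "'a \<Rightarrow> real"
  assumes "smooth_on S f"
  shows "smooth_on S (\<lambda>x. f x *\<^sub>R v)"
  using smooth_linear_comp[OF bounded_linear_scaleR_left assms] .

lemma smooth_uminus: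
  fixes S :: "'a::euclidean_space set" and f :: "'a \<Rightarrow> 'b::real_normed_vector"
  assumes "smooth_on S f"
  shows "smooth_on S (\<lambda>x. - f x)"
  using smooth_linear_comp[OF bounded_linear_minus[OF bounded_linear_ident] assms] by simp

lemma smooth_diff:
  fixes S :: "'a::euclidean_space set" and f g :: "'a \<Rightarrow> 'b::real_normed_vector"
  assumes "smooth_on S f" "smooth_on S g"
  shows "smooth_on S (\<lambda>x. f x - g x)"
  using smooth_add[OF assms(1) smooth_uminus[OF assms(2)]] by simp

lemma smooth_power:
  fixes S :: "'a::euclidean_space set" and f :: "'a \<Rightarrow> 'b::{real_normed_algebra,monoid_mult}"
  assumes "smooth_on S f"
  shows "smooth_on S (\<lambda>x. f x ^ n)"
  by (induction n) (auto intro!: smooth_mult assms smooth_const)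

lemma smooth_Re: "smooth_on S f \<Longrightarrow> smooth_on S (\<lambda>x. Re (f x))"
  by (rule smooth_linear_comp[OF bounded_linear_Re])
lemma smooth_Im: "smooth_on S f \<Longrightarrow> smooth_on S (\<lambda>x. Im (f x))"
  by (rule smooth_linear_comp[OF bounded_linear_Im])
lemma smooth_cnj: "smooth_on S f \<Longrightarrow> smooth_on S (\<lambda>x. cnj (f x))"
  by (rule smooth_linear_comp[OF bounded_linear_cnj])
lemma smooth_of_real: "smooth_on S (f::_\<Rightarrow>real) \<Longrightarrow> smooth_on S (\<lambda>x. complex_of_real (f x))"
  by (rule smooth_linear_comp[OF bounded_linear_of_real])
lemma smooth_fst: "smooth_on S f \<Longrightarrow> smooth_on S (\<lambda>x. fst (f x))"
  by (rule smooth_linear_comp[OF bounded_linear_fst])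
lemma smooth_snd: "smooth_on S f \<Longrightarrow> smooth_on S (\<lambda>x. snd (f x))"
  by (rule smooth_linear_comp[OF bounded_linear_snd])
lemma smooth_nth: "smooth_on S f \<Longrightarrow> smooth_on S (\<lambda>x. f x $ i)"
  by (rule smooth_linear_comp[OF bounded_linear_vec_nth])
lemma smooth_id: "smooth_on S (\<lambda>x. x)"
  by (rule smooth_linear[OF bounded_linear_ident])

lemma smooth_pair:
  fixes S :: "'a::euclidean_space set"
  assumes "smooth_on S f" "smooth_on S g"
  shows "smooth_on S (\<lambda>x. (f x, g x))"
proof -
  have "smooth_on S (\<lambda>x. (f x, 0) + (0, g x))"
    by (intro smooth_add smooth_linear_comp[OF _ assms(1)] smooth_linear_comp[OF _ assms(2)])
       (auto intro: bounded_linear_Pair bounded_linear_ident bounded_linear_zero)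
  then show ?thesis by simp
qed

lemma smooth_Complex:
  fixes S :: "'a::euclidean_space set"
  assumes "smooth_on S f" "smooth_on S g"
  shows "smooth_on S (\<lambda>x. Complex (f x) (g x))"
proof -
  have "smooth_on S (\<lambda>x. complex_of_real (f x) + \<i> * complex_of_real (g x))"
    by (intro smooth_add smooth_mult smooth_of_real assms smooth_const)
  moreover have "(\<lambda>x. Complex (f x) (g x)) = (\<lambda>x. complex_of_real (f x) + \<i> * complex_of_real (g x))"
    by (auto simp: complex_eq_iff)
  ultimately show ?thesis by simp
qed

lemma cinverse_eq: "inverse z = cnj z * complex_of_real (inverse ((Re z)\<^sup>2 + (Im z)\<^sup>2))"
proof -
  have "inverse z = 1 / z" by (simp add: inverse_eq_divide)
  also have "\<dots> = cnj z / complex_of_real ((cmod z)\<^sup>2)" by (subst complex_div_cnj) simp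
  finally show ?thesis by (simp add: cmod_power2 divide_inverse)
qed

lemma cpos: "z \<noteq> 0 \<Longrightarrow> 0 < (Re z)\<^sup>2 + (Im z)\<^sup>2"
  by (metis cmod_power2 zero_less_norm_iff zero_less_power)

lemma smooth_cinverse:
  fixes S :: "'a::euclidean_space set" and f :: "'a \<Rightarrow> complex"
  assumes "open S" "smooth_on S f" "\<And>x. x \<in> S \<Longrightarrow> f x \<noteq> 0"
  shows "smooth_on S (\<lambda>x. inverse (f x))"
proof -
  have "smooth_on S (\<lambda>x. cnj (f x) * complex_of_real (inverse ((Re (f x))\<^sup>2 + (Im (f x))\<^sup>2)))"
    apply (intro smooth_mult smooth_cnj assms smooth_of_real smooth_inverse smooth_add smooth_power smooth_Re smooth_Im)
    using assms(3) by (auto intro: cpos)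
  then show ?thesis by (subst cinverse_eq)
qed

lemma smooth_divide:
  fixes S :: "'a::euclidean_space set" and f g :: "'a \<Rightarrow> complex"
  assumes "open S" "smooth_on S f" "smooth_on S g" "\<And>x. x \<in> S \<Longrightarrow> g x \<noteq> 0"
  shows "smooth_on S (\<lambda>x. f x / g x)"
  unfolding divide_inverse by (intro smooth_mult smooth_cinverse assms)

lemma smooth_cmod:
  fixes S :: "'a::euclidean_space set" and f :: "'a \<Rightarrow> complex"
  assumes "open S" "smooth_on S f" "\<And>x. x \<in> S \<Longrightarrow> f x \<noteq> 0"
  shows "smooth_on S (\<lambda>x. cmod (f x))"
proof -
  have "smooth_on S (\<lambda>x. sqrt ((Re (f x))\<^sup>2 + (Im (f x))\<^sup>2))"
    apply (intro smooth_sqrt smooth_add smooth_power smooth_Re smooth_Im assms)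
    using assms(3) by (auto intro: cpos)
  then show ?thesis by (simp add: cmod_def)
qed

lemma vector3_eq: "(vector [a, b, c] :: real^3) = a *\<^sub>R axis 1 1 + b *\<^sub>R axis 2 1 + c *\<^sub>R axis 3 1"
  by (simp add: vec_eq_iff forall_3 axis_def)

lemma smooth_vector3:
  fixes S :: "'a::euclidean_space set"
  assumes "smooth_on S f" "smooth_on S g" "smooth_on S h"
  shows "smooth_on S (\<lambda>x. vector [f x, g x, h x] :: real^3)"
  unfolding vector3_eq by (intro smooth_add smooth_scaleR assms)

lemma in_disc: "z \<in> unit_disc \<longleftrightarrow> cmod z < 1"
  by (simp add: unit_disc_def)

lemma moeb_identity:
  "(cmod (1 - cnj a * w))\<^sup>2 - (cmod (a - w))\<^sup>2 = (1 - (cmod a)\<^sup>2) * (1 - (cmod w)\<^sup>2)"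
  unfolding cmod_power2 by (simp add: algebra_simps power2_eq_square)

lemma moeb_den:
  assumes "cmod a < 1" "cmod w < 1"
  shows "1 - cnj a * w \<noteq> 0"
proof
  assume "1 - cnj a * w = 0"
  then have "cnj a * w = 1" by simp
  then have "cmod a * cmod w = 1" by (metis complex_mod_cnj norm_mult norm_one)
  moreover have "cmod a * cmod w < 1"
    using assms by (metis mult_strict_mono' norm_ge_zero mult_1_left) 
  ultimately show False by simp
qed

lemma moeb_in:
  assumes "cmod a < 1" "cmod w < 1"
  shows "cmod (moeb a w) < 1"
proof -
  have d: "1 - cnj a * w \<noteq> 0" by (rule moeb_den[OF assms])
  have "(cmod (a - w))\<^sup>2 < (cmod (1 - cnj a * w))\<^sup>2"
  proof -
    have "0 < (1 - (cmod a)\<^sup>2) * (1 - (cmod w)\<^sup>2)"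
      using assms by (intro mult_pos_pos) (auto simp: power_less_one_iff abs_less_iff power2_less_eq_zero_iff
          intro!: power_less_one_iff[THEN iffD2])
    then show ?thesis using moeb_identity[of a w] by linarith
  qed
  then have "cmod (a - w) < cmod (1 - cnj a * w)"
    by (meson norm_ge_zero power2_less_imp_less)
  then show ?thesis using d by (simp add: moeb_def norm_divide divide_less_eq)
qed

lemma moeb_inv:
  assumes "cmod a < 1" "cmod w < 1"
  shows "moeb a (moeb a w) = w"
proof -
  have d: "1 - cnj a * w \<noteq> 0" by (rule moeb_den[OF assms])
  have a2: "1 - cnj a * a \<noteq> 0"
    using moeb_den[OF assms(1) assms(1)] .
  have n: "a - moeb a w = w * (1 - cnj a * a) / (1 - cnj a * w)"
    unfolding moeb_def using d by (simp add: field_simps)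
  have e: "1 - cnj a * moeb a w = (1 - cnj a * a) / (1 - cnj a * w)"
    unfolding moeb_def using d by (simp add: field_simps)
  show ?thesis unfolding moeb_def[of a "moeb a w"] n e using a2 d by simp
qed

lemma moeb_zero_iff:
  assumes "cmod a < 1" "cmod w < 1"
  shows "moeb a w = 0 \<longleftrightarrow> a = w"
  using moeb_den[OF assms] by (simp add: moeb_def)

lemma cmod_moeb_swap: "cmod (moeb a b) = cmod (moeb b a)"
proof -
  have "cmod (1 - cnj a * b) = cmod (1 - cnj b * a)"
    by (metis complex_cnj_cnj complex_cnj_diff complex_cnj_mult complex_cnj_one complex_mod_cnj mult.commute)
  moreover have "cmod (a - b) = cmod (b - a)" by (simp add: norm_minus_commute)
  ultimately show ?thesis by (simp add: moeb_def norm_divide)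
qed

lemma vieta:
  fixes a b c d :: complex
  assumes "a + b = c + d" "a * b = c * d"
  shows "(c = a \<and> d = b) \<or> (c = b \<and> d = a)"
proof -
  have "(c - a) * (c - b) = 0"
  proof -
    have "(c - a) * (c - b) = c * c - c * (a + b) + a * b" by (simp add: algebra_simps)
    also have "\<dots> = 0" using assms by (simp add: algebra_simps)
    finally show ?thesis .
  qed
  then have "c = a \<or> c = b" by simp
  then show ?thesis using assms by auto
qed

lemma qmap_eq:
  assumes "z1 \<in> unit_disc" "z2 \<in> unit_disc"
  shows "qmap (z1 + z2, z1 * z2) = cmod (moeb z1 z2)"
  unfolding qmap_def
proof (rule the_equality)
  show "\<exists>w1 w2. w1 \<in> unit_disc \<and> w2 \<in> unit_disc \<and> (z1 + z2, z1 * z2) = (w1 + w2, w1 * w2) \<and>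
      cmod (moeb z1 z2) = cmod (moeb w1 w2)" using assms by blast
  fix a assume "\<exists>w1 w2. w1 \<in> unit_disc \<and> w2 \<in> unit_disc \<and> (z1 + z2, z1 * z2) = (w1 + w2, w1 * w2) \<and>
      a = cmod (moeb w1 w2)"
  then obtain w1 w2 where "(z1 + z2, z1 * z2) = (w1 + w2, w1 * w2)" "a = cmod (moeb w1 w2)" by blast
  then show "a = cmod (moeb z1 z2)" using vieta[of z1 z2 w1 w2] cmod_moeb_swap by auto
qed

lemma royal_iff:
  assumes "z1 \<in> unit_disc"
  shows "(z1 + z2, z1 * z2) \<in> royal \<longleftrightarrow> z1 = z2"
proof
  assume "(z1 + z2, z1 * z2) \<in> royal"
  then obtain z where z: "z1 + z2 = 2 * z" "z1 * z2 = z ^ 2" by (auto simp: royal_def)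
  have "(z1 - z2)^2 = (z1 + z2)^2 - 4 * (z1 * z2)" by (simp add: power2_eq_square algebra_simps)
  also have "\<dots> = 0" using z by (simp add: power2_eq_square algebra_simps)
  finally show "z1 = z2" by simp
next
  assume "z1 = z2"
  then show "(z1 + z2, z1 * z2) \<in> royal" using assms
    by (auto simp: royal_def power2_eq_square intro!: exI[of _ z1])
qed

lemma symG_iff: "x \<in> symG - royal \<longleftrightarrow> (\<exists>z1 z2. z1 \<in> unit_disc \<and> z2 \<in> unit_disc \<and> z1 \<noteq> z2 \<and> x = (z1 + z2, z1 * z2))"
  unfolding symG_def using royal_iff by auto

definition psq :: "complex \<Rightarrow> complex" where
  "psq w = Complex (sqrt ((sqrt ((Re w)\<^sup>2 + (Im w)\<^sup>2) + Re w) / 2))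
                   (Im w / (2 * sqrt ((sqrt ((Re w)\<^sup>2 + (Im w)\<^sup>2) + Re w) / 2)))"

lemma psq_of_sq:
  assumes "Re c > 0"
  shows "psq (c\<^sup>2) = c"
proof -
  obtain x y where c: "c = Complex x y" by (metis complex.collapse)
  have x: "x > 0" using assms c by simp
  have "(Re (c\<^sup>2))\<^sup>2 + (Im (c\<^sup>2))\<^sup>2 = (x\<^sup>2 + y\<^sup>2)\<^sup>2"
    unfolding c by (simp add: power2_eq_square algebra_simps)
  then have m: "sqrt ((Re (c\<^sup>2))\<^sup>2 + (Im (c\<^sup>2))\<^sup>2) = x\<^sup>2 + y\<^sup>2" by simp
  have h: "(x\<^sup>2 + y\<^sup>2 + Re (c\<^sup>2)) / 2 = x\<^sup>2" unfolding c by (simp add: power2_eq_square)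
  have r: "sqrt ((sqrt ((Re (c\<^sup>2))\<^sup>2 + (Im (c\<^sup>2))\<^sup>2) + Re (c\<^sup>2)) / 2) = x"
  proof -
    have "sqrt ((sqrt ((Re (c\<^sup>2))\<^sup>2 + (Im (c\<^sup>2))\<^sup>2) + Re (c\<^sup>2)) / 2) = sqrt (x\<^sup>2)"
      by (simp only: m h)
    then show ?thesis using x by simp
  qed
  show ?thesis unfolding psq_def r using x c by (simp add: power2_eq_square)
qed

lemma psq_sq:
  assumes "Re w > 0"
  shows "(psq w)\<^sup>2 = w" "Re (psq w) > 0"
proof -
  define a b where "a = Re w" "b = Im w"
  define m where "m = sqrt (a\<^sup>2 + b\<^sup>2)"
  have m2: "m\<^sup>2 = a\<^sup>2 + b\<^sup>2" unfolding m_def by simp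
  have ma: "m \<ge> \<bar>a\<bar>" unfolding m_def by (simp add: real_sqrt_ge_abs1 ) 
  have a: "a > 0" using assms a_b_def by simp
  define xx where "xx = sqrt ((m + a) / 2)"
  have mpos: "m + a > 0" using ma a by linarith
  have xx: "xx > 0" unfolding xx_def using mpos by simp
  have xx2: "xx\<^sup>2 = (m + a) / 2" unfolding xx_def using mpos by simp
  have p: "psq w = Complex xx (b / (2 * xx))"
    unfolding psq_def xx_def m_def a_b_def by simp
  show "Re (psq w) > 0" using p xx by simp
  have "xx\<^sup>2 - (b / (2 * xx))\<^sup>2 = a"
  proof -
    have "xx\<^sup>2 - (b / (2 * xx))\<^sup>2 = xx\<^sup>2 - b\<^sup>2 / (4 * xx\<^sup>2)"
      by (simp add: power_divide power_mult_distrib)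
    also have "\<dots> = (m + a) / 2 - b\<^sup>2 / (2 * (m + a))" using mpos by (simp add: xx2 field_simps)
    also have "\<dots> = ((m + a)\<^sup>2 - b\<^sup>2) / (2 * (m + a))"
      using mpos by (simp add: field_simps power2_eq_square)
    also have "(m + a)\<^sup>2 - b\<^sup>2 = 2 * a * (m + a)"
      using m2 by (simp add: power2_eq_square algebra_simps)
    also have "2 * a * (m + a) / (2 * (m + a)) = a" using mpos by (simp add: field_simps)
    finally show ?thesis .
  qed
  moreover have "2 * xx * (b / (2 * xx)) = b" using xx by simp
  ultimately show "(psq w)\<^sup>2 = w" unfolding p using xx
    by (simp add: complex_eq_iff power2_eq_square a_b_def)
qed

lemma smooth_psq:
  fixes S :: "'a::euclidean_space set"
  assumes S: "open S" and g: "smooth_on S g" and pos: "\<And>x. x \<in> S \<Longrightarrow> Re (g x) > 0"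
  shows "smooth_on S (\<lambda>x. psq (g x))"
proof -
  have m: "smooth_on S (\<lambda>x. sqrt ((Re (g x))\<^sup>2 + (Im (g x))\<^sup>2))"
    by (intro smooth_sqrt S smooth_add smooth_power smooth_Re smooth_Im g)
      (use pos in \<open>force intro: add_pos_nonneg\<close>)
  have mp: "sqrt ((Re (g x))\<^sup>2 + (Im (g x))\<^sup>2) + Re (g x) > 0" if "x \<in> S" for x
    using pos[OF that] real_sqrt_ge_abs1[of "Re (g x)" "Im (g x)"] by linarith
  have xx: "smooth_on S (\<lambda>x. sqrt ((sqrt ((Re (g x))\<^sup>2 + (Im (g x))\<^sup>2) + Re (g x)) / 2))"
    unfolding divide_inverse
    by (intro smooth_sqrt S smooth_mult smooth_add m smooth_Re g smooth_const) (use mp in auto)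
  have "smooth_on S (\<lambda>x. Complex (sqrt ((sqrt ((Re (g x))\<^sup>2 + (Im (g x))\<^sup>2) + Re (g x)) / 2))
         (Im (g x) * inverse (2 * sqrt ((sqrt ((Re (g x))\<^sup>2 + (Im (g x))\<^sup>2) + Re (g x)) / 2))))"
    by (intro smooth_Complex xx smooth_mult smooth_Im g smooth_inverse S smooth_const)
       (use mp in auto)
  then show ?thesis unfolding psq_def divide_inverse .
qed

definition zeta :: "complex \<times> complex \<Rightarrow> complex" where
  "zeta u = (fst u)\<^sup>2 - 4 * snd u"
definition Z1 :: "complex \<Rightarrow> complex \<times> complex \<Rightarrow> complex" where
  "Z1 \<nu> u = (fst u + cnj \<nu> * psq (\<nu>\<^sup>2 * zeta u)) / 2"
definition Z2 :: "complex \<Rightarrow> complex \<times> complex \<Rightarrow> complex" where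
  "Z2 \<nu> u = (fst u - cnj \<nu> * psq (\<nu>\<^sup>2 * zeta u)) / 2"
definition O1 :: "complex \<Rightarrow> (complex \<times> complex) set" where
  "O1 \<nu> = {u. 0 < Re (\<nu>\<^sup>2 * zeta u)}"
definition O2 :: "complex \<Rightarrow> (complex \<times> complex) set" where
  "O2 \<nu> = {u \<in> O1 \<nu>. cmod (Z1 \<nu> u) < 1 \<and> cmod (Z2 \<nu> u) < 1}"
definition Wf :: "complex \<Rightarrow> complex \<times> complex \<Rightarrow> complex" where
  "Wf \<nu> u = moeb (Z1 \<nu> u) (Z2 \<nu> u)"
definition O3 :: "complex \<Rightarrow> complex \<Rightarrow> (complex \<times> complex) set" where
  "O3 \<nu> \<mu> = {u \<in> O2 \<nu>. 0 < Re (\<mu> * Wf \<nu> u)}"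
definition phi :: "complex \<Rightarrow> complex \<Rightarrow> complex \<times> complex \<Rightarrow> (real^3) \<times> real" where
  "phi \<nu> \<mu> u = (vector [Re (Z1 \<nu> u), Im (Z1 \<nu> u), Im (\<mu> * Wf \<nu> u)], cmod (Wf \<nu> u))"
definition Cz1 :: "(real^3) \<times> real \<Rightarrow> complex" where
  "Cz1 v = Complex (fst v $ 1) (fst v $ 2)"
definition Cw :: "complex \<Rightarrow> (real^3) \<times> real \<Rightarrow> complex" where
  "Cw \<mu> v = cnj \<mu> * Complex (sqrt ((snd v)\<^sup>2 - (fst v $ 3)\<^sup>2)) (fst v $ 3)"
definition psi :: "complex \<Rightarrow> (real^3) \<times> real \<Rightarrow> complex \<times> complex" where
  "psi \<mu> v = (Cz1 v + moeb (Cz1 v) (Cw \<mu> v), Cz1 v * moeb (Cz1 v) (Cw \<mu> v))"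
definition V1 :: "((real^3) \<times> real) set" where
  "V1 = {v. cmod (Cz1 v) < 1 \<and> \<bar>fst v $ 3\<bar> < snd v \<and> snd v < 1}"
definition Cd :: "complex \<Rightarrow> (real^3) \<times> real \<Rightarrow> complex" where
  "Cd \<mu> v = Cz1 v - moeb (Cz1 v) (Cw \<mu> v)"
definition V0 :: "complex \<Rightarrow> complex \<Rightarrow> ((real^3) \<times> real) set" where
  "V0 \<nu> \<mu> = {v \<in> V1. \<bar>Im (\<nu> * Cd \<mu> v)\<bar> < Re (\<nu> * Cd \<mu> v)}"

lemma open_sub:
  fixes f g :: "'a::topological_space \<Rightarrow> real"
  assumes "open S" "continuous_on S f" "continuous_on S g"
  shows "open {x \<in> S. f x < g x}"
proof -
  obtain A where "open A" "A \<inter> S = {x \<in> S. f x < g x}"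
    using open_Collect_less_Int[OF assms(2,3)] by blast
  then show ?thesis using assms(1) by (metis open_Int)
qed

lemma unit_cnj: "cmod \<nu> = 1 \<Longrightarrow> cnj \<nu> * \<nu> = 1"
  by (metis complex_norm_square mult.commute of_real_1 power_one)

lemma smooth_Z1: "smooth_on (O1 \<nu>) (Z1 \<nu>)" and smooth_Z2: "smooth_on (O1 \<nu>) (Z2 \<nu>)"
  and open_O1: "open (O1 \<nu>)"
proof -
  have sz: "smooth_on S zeta" for S
    unfolding zeta_def
    by (intro smooth_diff smooth_power smooth_mult smooth_const smooth_fst smooth_snd smooth_id)
  have c: "continuous_on UNIV (\<lambda>u. Re (\<nu>\<^sup>2 * zeta u))"
    by (intro smooth_cont smooth_Re smooth_mult smooth_const sz)
  have e: "{x \<in> UNIV. (0::real) < Re (\<nu>\<^sup>2 * zeta x)} = O1 \<nu>" unfolding O1_def by blast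
  show o: "open (O1 \<nu>)"
    using open_sub[OF open_UNIV continuous_on_const c, of 0] unfolding e .
  have p: "smooth_on (O1 \<nu>) (\<lambda>u. psq (\<nu>\<^sup>2 * zeta u))"
    by (intro smooth_psq o smooth_mult smooth_const sz) (auto simp: O1_def)
  have "smooth_on (O1 \<nu>) (\<lambda>u. (fst u + cnj \<nu> * psq (\<nu>\<^sup>2 * zeta u)) * inverse 2)"
    by (intro smooth_mult smooth_add smooth_fst smooth_id smooth_const p)
  then show "smooth_on (O1 \<nu>) (Z1 \<nu>)"
    unfolding Z1_def[abs_def] divide_inverse .
  have "smooth_on (O1 \<nu>) (\<lambda>u. (fst u - cnj \<nu> * psq (\<nu>\<^sup>2 * zeta u)) * inverse 2)"
    by (intro smooth_mult smooth_diff smooth_fst smooth_id smooth_const p)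
  then show "smooth_on (O1 \<nu>) (Z2 \<nu>)"
    unfolding Z2_def[abs_def] divide_inverse .
qed

lemma open_O2: "open (O2 \<nu>)"
proof -
  have e: "O2 \<nu> = {u \<in> {u \<in> O1 \<nu>. cmod (Z1 \<nu> u) < 1}. cmod (Z2 \<nu> u) < 1}"
    by (auto simp: O2_def)
  have o: "open {u \<in> O1 \<nu>. cmod (Z1 \<nu> u) < 1}"
    by (intro open_sub open_O1 continuous_intros smooth_cont smooth_Z1)
  show ?thesis unfolding e
    by (intro open_sub o continuous_intros continuous_on_subset[OF smooth_cont[OF smooth_Z2]]) auto
qed

lemma Wf_eq: "Wf \<nu> u = (Z1 \<nu> u - Z2 \<nu> u) / (1 - cnj (Z1 \<nu> u) * Z2 \<nu> u)"
  by (simp add: Wf_def moeb_def)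

lemma smooth_Wf: "smooth_on (O2 \<nu>) (Wf \<nu>)"
proof -
  have s1: "smooth_on (O2 \<nu>) (Z1 \<nu>)" by (rule smooth_mono[OF smooth_Z1]) (auto simp: O2_def)
  have s2: "smooth_on (O2 \<nu>) (Z2 \<nu>)" by (rule smooth_mono[OF smooth_Z2]) (auto simp: O2_def)
  have d: "1 - cnj (Z1 \<nu> u) * Z2 \<nu> u \<noteq> 0" if "u \<in> O2 \<nu>" for u
    by (rule moeb_den) (use that in \<open>auto simp: O2_def\<close>)
  have "smooth_on (O2 \<nu>) (\<lambda>u. (Z1 \<nu> u - Z2 \<nu> u) / (1 - cnj (Z1 \<nu> u) * Z2 \<nu> u))"
    by (intro smooth_divide open_O2 smooth_diff smooth_mult smooth_cnj s1 s2 smooth_const d)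
  then show ?thesis by (simp add: Wf_eq[abs_def])
qed

lemma open_O3: "open (O3 \<nu> \<mu>)"
  unfolding O3_def
  by (intro open_sub open_O2 continuous_intros smooth_cont smooth_Wf)

lemma smooth_phi: "smooth_on (O3 \<nu> \<mu>) (phi \<nu> \<mu>)"
proof -
  have s1: "smooth_on (O3 \<nu> \<mu>) (Z1 \<nu>)" by (rule smooth_mono[OF smooth_Z1]) (auto simp: O2_def O3_def)
  have sw: "smooth_on (O3 \<nu> \<mu>) (Wf \<nu>)" by (rule smooth_mono[OF smooth_Wf]) (auto simp: O3_def)
  have nz: "Wf \<nu> u \<noteq> 0" if "u \<in> O3 \<nu> \<mu>" for u
    using that by (auto simp: O3_def)
  show ?thesis unfolding phi_def[abs_def]
    by (intro smooth_pair smooth_vector3 smooth_Re smooth_Im smooth_mult smooth_const s1 sw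
        smooth_cmod open_O3 nz)
qed

lemma smooth_Cz1: "smooth_on S Cz1"
  unfolding Cz1_def[abs_def] by (intro smooth_Complex smooth_nth smooth_fst smooth_id)

lemma open_V1: "open V1"
proof -
  have c: "continuous_on UNIV Cz1" by (rule smooth_cont[OF smooth_Cz1])
  have "open {v::(real^3)\<times>real. cmod (Cz1 v) < 1}"
    by (rule open_Collect_less) (auto intro!: continuous_intros c)
  moreover have "open {v::(real^3)\<times>real. \<bar>fst v $ 3\<bar> < snd v}"
    by (rule open_Collect_less) (auto intro!: continuous_intros)
  moreover have "open {v::(real^3)\<times>real. snd v < 1}"
    by (rule open_Collect_less) (auto intro!: continuous_intros)
  ultimately show ?thesis unfolding V1_def by (intro open_Collect_conj) auto
qed

lemma cmod_Cw: "cmod \<mu> = 1 \<Longrightarrow> \<bar>fst v $ 3\<bar> < snd v \<Longrightarrow> cmod (Cw \<mu> v) = snd v"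
proof -
  assume m: "cmod \<mu> = 1" and t: "\<bar>fst v $ 3\<bar> < snd v"
  have p: "(fst v $ 3)\<^sup>2 < (snd v)\<^sup>2" using t
    by (metis abs_ge_zero abs_le_self_iff less_le_trans order_less_imp_le power2_abs power_strict_mono zero_less_numeral)
  have "cmod (Cw \<mu> v) = cmod (Complex (sqrt ((snd v)\<^sup>2 - (fst v $ 3)\<^sup>2)) (fst v $ 3))"
    by (simp add: Cw_def norm_mult m)
  also have "\<dots> = sqrt ((snd v)\<^sup>2)" using p by (simp add: cmod_def)
  also have "\<dots> = snd v" using t by simp
  finally show ?thesis .
qed

lemma smooth_mw: "cmod \<mu> = 1 \<Longrightarrow> smooth_on V1 (\<lambda>v. moeb (Cz1 v) (Cw \<mu> v))"
proof -
  assume m: "cmod \<mu> = 1"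
  have p: "(fst v $ 3)\<^sup>2 < (snd v)\<^sup>2" if "v \<in> V1" for v
    using that unfolding V1_def
    by (metis (mono_tags, lifting) abs_ge_zero abs_le_self_iff less_le_trans mem_Collect_eq order_less_imp_le power2_abs power_strict_mono zero_less_numeral)
  have sw: "smooth_on V1 (Cw \<mu>)" unfolding Cw_def[abs_def]
    by (intro smooth_mult smooth_const smooth_Complex smooth_sqrt open_V1 smooth_diff smooth_power
        smooth_nth smooth_fst smooth_snd smooth_id) (use p in auto)
  have d: "1 - cnj (Cz1 v) * Cw \<mu> v \<noteq> 0" if "v \<in> V1" for v
    by (rule moeb_den) (use that in \<open>auto simp: V1_def cmod_Cw m\<close>)
  show ?thesis unfolding moeb_def
    by (intro smooth_divide open_V1 smooth_diff smooth_mult smooth_cnj smooth_Cz1 sw smooth_const d)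
qed

lemma smooth_psi: "cmod \<mu> = 1 \<Longrightarrow> smooth_on V1 (psi \<mu>)"
  unfolding psi_def[abs_def]
  by (intro smooth_pair smooth_add smooth_mult smooth_Cz1 smooth_mw)

lemma open_V0: "cmod \<mu> = 1 \<Longrightarrow> open (V0 \<nu> \<mu>)"
proof -
  assume m: "cmod \<mu> = 1"
  have "continuous_on V1 (Cd \<mu>)" unfolding Cd_def[abs_def]
    by (intro smooth_cont smooth_diff smooth_Cz1 smooth_mw m)
  then show ?thesis unfolding V0_def
    by (intro open_sub open_V1 continuous_intros)
qed

lemma O2_props:
  assumes n: "cmod \<nu> = 1" and u: "u \<in> O2 \<nu>"
  shows "u = (Z1 \<nu> u + Z2 \<nu> u, Z1 \<nu> u * Z2 \<nu> u)" "Z1 \<nu> u \<noteq> Z2 \<nu> u"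
    "Z1 \<nu> u \<in> unit_disc" "Z2 \<nu> u \<in> unit_disc"
proof -
  define r where "r = psq (\<nu>\<^sup>2 * zeta u)"
  have pos: "0 < Re (\<nu>\<^sup>2 * zeta u)" using u by (simp add: O2_def O1_def)
  have r2: "r\<^sup>2 = \<nu>\<^sup>2 * zeta u" and rp: "Re r > 0" using psq_sq[OF pos] by (auto simp: r_def)
  have c2: "(cnj \<nu> * r)\<^sup>2 = zeta u"
  proof -
    have "(cnj \<nu> * r)\<^sup>2 = (cnj \<nu> * \<nu>)\<^sup>2 * zeta u" using r2 by (simp add: power_mult_distrib)
    then show ?thesis using unit_cnj[OF n] by simp
  qed
  have z1: "Z1 \<nu> u = (fst u + cnj \<nu> * r) / 2" by (simp add: Z1_def r_def)
  have z2: "Z2 \<nu> u = (fst u - cnj \<nu> * r) / 2" by (simp add: Z2_def r_def)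
  have "Z1 \<nu> u * Z2 \<nu> u = ((fst u)\<^sup>2 - (cnj \<nu> * r)\<^sup>2) / 4"
    unfolding z1 z2 by (simp add: power2_eq_square algebra_simps)
  also have "\<dots> = snd u" unfolding c2 zeta_def by simp
  finally have "Z1 \<nu> u * Z2 \<nu> u = snd u" .
  moreover have "Z1 \<nu> u + Z2 \<nu> u = fst u" unfolding z1 z2 by (simp add: field_simps)
  ultimately show "u = (Z1 \<nu> u + Z2 \<nu> u, Z1 \<nu> u * Z2 \<nu> u)" by simp
  have "\<nu> \<noteq> 0" using n by auto
  moreover have "r \<noteq> 0" using rp by auto
  ultimately show "Z1 \<nu> u \<noteq> Z2 \<nu> u" unfolding z1 z2 by (simp add: field_simps)
  show "Z1 \<nu> u \<in> unit_disc" "Z2 \<nu> u \<in> unit_disc" using u by (auto simp: O2_def in_disc)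
qed

lemma O2_sub: "cmod \<nu> = 1 \<Longrightarrow> O2 \<nu> \<subseteq> symG - royal"
proof
  fix u assume n: "cmod \<nu> = 1" and u: "u \<in> O2 \<nu>"
  show "u \<in> symG - royal" unfolding symG_iff
    using O2_props[OF n u] by blast
qed

lemma O2_qmap: "cmod \<nu> = 1 \<Longrightarrow> u \<in> O2 \<nu> \<Longrightarrow> qmap u = cmod (Wf \<nu> u)"
  using O2_props[of \<nu> u] qmap_eq[of "Z1 \<nu> u" "Z2 \<nu> u"] by (simp add: Wf_def)

lemma Z_recover:
  assumes n: "cmod \<nu> = 1" and s: "\<bar>Im (\<nu> * (z1 - z2))\<bar> < Re (\<nu> * (z1 - z2))"
  shows "(z1 + z2, z1 * z2) \<in> O1 \<nu>" "Z1 \<nu> (z1 + z2, z1 * z2) = z1" "Z2 \<nu> (z1 + z2, z1 * z2) = z2"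
proof -
  define c where "c = \<nu> * (z1 - z2)"
  have ze: "\<nu>\<^sup>2 * zeta (z1 + z2, z1 * z2) = c\<^sup>2"
    by (simp add: zeta_def c_def power2_eq_square algebra_simps)
  have "Re (c\<^sup>2) = (Re c)\<^sup>2 - (Im c)\<^sup>2" by (simp add: power2_eq_square)
  moreover have "(Im c)\<^sup>2 < (Re c)\<^sup>2" using s unfolding c_def
    by (metis abs_ge_zero abs_less_iff power2_abs power_strict_mono less_trans zero_less_numeral abs_of_pos order.strict_trans1)
  ultimately have "0 < Re (c\<^sup>2)" by simp
  then show "(z1 + z2, z1 * z2) \<in> O1 \<nu>" unfolding O1_def mem_Collect_eq ze .
  have rc: "Re c > 0" using s unfolding c_def[symmetric] by linarith
  have ps: "psq (\<nu>\<^sup>2 * zeta (z1 + z2, z1 * z2)) = c" unfolding ze by (rule psq_of_sq[OF rc])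
  have cc: "cnj \<nu> * c = z1 - z2" unfolding c_def using unit_cnj[OF n]
    by (metis mult.assoc mult_1)
  show "Z1 \<nu> (z1 + z2, z1 * z2) = z1" unfolding Z1_def ps using cc by (simp add: field_simps)
  show "Z2 \<nu> (z1 + z2, z1 * z2) = z2" unfolding Z2_def ps using cc by (simp add: field_simps)
qed

lemma vector3_nth: "vector [(x::real^3) $ 1, x $ 2, x $ 3] = x"
  by (simp add: vec_eq_iff forall_3 vector_3)

lemma psi_phi:
  assumes n: "cmod \<nu> = 1" and m: "cmod \<mu> = 1" and u: "u \<in> O3 \<nu> \<mu>"
  shows "Cz1 (phi \<nu> \<mu> u) = Z1 \<nu> u" "Cw \<mu> (phi \<nu> \<mu> u) = Wf \<nu> u" "psi \<mu> (phi \<nu> \<mu> u) = u"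
proof -
  have u2: "u \<in> O2 \<nu>" and rp: "0 < Re (\<mu> * Wf \<nu> u)" using u by (auto simp: O3_def)
  show c1: "Cz1 (phi \<nu> \<mu> u) = Z1 \<nu> u" by (simp add: Cz1_def phi_def vector_3)
  have "(cmod (Wf \<nu> u))\<^sup>2 = (cmod (\<mu> * Wf \<nu> u))\<^sup>2" by (simp add: norm_mult m)
  also have "\<dots> = (Re (\<mu> * Wf \<nu> u))\<^sup>2 + (Im (\<mu> * Wf \<nu> u))\<^sup>2" by (rule cmod_power2)
  finally have "sqrt ((cmod (Wf \<nu> u))\<^sup>2 - (Im (\<mu> * Wf \<nu> u))\<^sup>2) = Re (\<mu> * Wf \<nu> u)"
    using rp by simp
  then have "Complex (sqrt ((cmod (Wf \<nu> u))\<^sup>2 - (Im (\<mu> * Wf \<nu> u))\<^sup>2)) (Im (\<mu> * Wf \<nu> u)) = \<mu> * Wf \<nu> u"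
    by (simp add: complex_eq_iff)
  then show c2: "Cw \<mu> (phi \<nu> \<mu> u) = Wf \<nu> u"
    using unit_cnj[OF m] by (simp add: Cw_def phi_def vector_3 mult.assoc[symmetric])
  have "moeb (Z1 \<nu> u) (Wf \<nu> u) = Z2 \<nu> u"
    unfolding Wf_def using O2_props[OF n u2] by (intro moeb_inv) (auto simp: in_disc)
  then show "psi \<mu> (phi \<nu> \<mu> u) = u"
    unfolding psi_def c1 c2 using O2_props(1)[OF n u2] by simp
qed

lemma phi_psi:
  assumes n: "cmod \<nu> = 1" and m: "cmod \<mu> = 1" and v: "v \<in> V0 \<nu> \<mu>"
  shows "psi \<mu> v \<in> O3 \<nu> \<mu>" "phi \<nu> \<mu> (psi \<mu> v) = v"
proof -
  define z1 w where "z1 = Cz1 v" "w = Cw \<mu> v"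
  define z2 where "z2 = moeb z1 w"
  have v1: "v \<in> V1" using v by (simp add: V0_def)
  have z1d: "cmod z1 < 1" using v1 by (simp add: V1_def z1_w_def)
  have tw: "\<bar>fst v $ 3\<bar> < snd v" using v1 by (simp add: V1_def)
  have cw: "cmod w = snd v" using cmod_Cw[OF m tw] by (simp add: z1_w_def)
  have wd: "cmod w < 1" using v1 cw by (simp add: V1_def)
  have z2d: "cmod z2 < 1" unfolding z2_def by (rule moeb_in[OF z1d wd])
  have s: "\<bar>Im (\<nu> * (z1 - z2))\<bar> < Re (\<nu> * (z1 - z2))"
    using v by (simp add: V0_def Cd_def z1_w_def z2_def)
  have ps: "psi \<mu> v = (z1 + z2, z1 * z2)" by (simp add: psi_def z1_w_def z2_def)
  note R = Z_recover[OF n s]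
  have u2: "psi \<mu> v \<in> O2 \<nu>" unfolding ps O2_def using R z1d z2d by simp
  have wf: "Wf \<nu> (psi \<mu> v) = w" unfolding ps Wf_def R(2,3) unfolding z2_def by (rule moeb_inv[OF z1d wd])
  have p: "(fst v $ 3)\<^sup>2 < (snd v)\<^sup>2" using tw
    by (metis abs_ge_zero abs_le_self_iff less_le_trans order_less_imp_le power2_abs power_strict_mono zero_less_numeral)
  have mw: "\<mu> * w = Complex (sqrt ((snd v)\<^sup>2 - (fst v $ 3)\<^sup>2)) (fst v $ 3)"
    unfolding z1_w_def Cw_def using unit_cnj[OF m] by (simp add: mult.assoc[symmetric] mult.commute)
  have "0 < Re (\<mu> * w)" unfolding mw using p by simp
  then show "psi \<mu> v \<in> O3 \<nu> \<mu>" unfolding O3_def using u2 wf by simp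
  have "Im (\<mu> * w) = fst v $ 3" unfolding mw by simp
  then show "phi \<nu> \<mu> (psi \<mu> v) = v"
    unfolding phi_def wf using R cw ps
    by (simp add: z1_w_def Cz1_def vector3_nth)
qed

lemma base_point:
  assumes z1: "z1 \<in> unit_disc" and z2: "z2 \<in> unit_disc" and ne: "z1 \<noteq> z2"
  shows "\<exists>\<nu> \<mu>. cmod \<nu> = 1 \<and> cmod \<mu> = 1 \<and> (z1 + z2, z1 * z2) \<in> O3 \<nu> \<mu> \<and>
           phi \<nu> \<mu> (z1 + z2, z1 * z2) \<in> V0 \<nu> \<mu>"
proof -
  define d where "d = z1 - z2"
  define w0 where "w0 = moeb z1 z2"
  define \<nu> where "\<nu> = cnj d / complex_of_real (cmod d)"
  define \<mu> where "\<mu> = cnj w0 / complex_of_real (cmod w0)"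
  define x where "x = (z1 + z2, z1 * z2)"
  have z1d: "cmod z1 < 1" and z2d: "cmod z2 < 1" using z1 z2 by (auto simp: in_disc)
  have d0: "d \<noteq> 0" using ne d_def by simp
  have w00: "w0 \<noteq> 0" using moeb_zero_iff[OF z1d z2d] ne w0_def by simp
  have n: "cmod \<nu> = 1" using d0 by (simp add: \<nu>_def norm_divide)
  have m: "cmod \<mu> = 1" using w00 by (simp add: \<mu>_def norm_divide)
  have sq: "z * cnj z = complex_of_real (cmod z) * complex_of_real (cmod z)" for z
    by (metis complex_norm_square of_real_mult power2_eq_square)
  have nd: "\<nu> * d = complex_of_real (cmod d)"
    using d0 sq[of d] unfolding \<nu>_def
    by (simp add: field_simps mult.commute)
  have mw: "\<mu> * w0 = complex_of_real (cmod w0)"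
    using w00 sq[of w0] unfolding \<mu>_def
    by (simp add: field_simps mult.commute)
  have s: "\<bar>Im (\<nu> * (z1 - z2))\<bar> < Re (\<nu> * (z1 - z2))"
    using nd d0 unfolding d_def by simp
  note R = Z_recover[OF n s]
  have x2: "x \<in> O2 \<nu>" unfolding x_def O2_def using R z1d z2d by simp
  have wf: "Wf \<nu> x = w0" unfolding x_def Wf_def R w0_def ..
  have "0 < Re (\<mu> * w0)" unfolding mw using w00 by simp
  then have x3: "x \<in> O3 \<nu> \<mu>" unfolding O3_def using x2 wf by simp
  note PP = psi_phi[OF n m x3]
  have w0d: "cmod w0 < 1" unfolding w0_def by (rule moeb_in[OF z1d z2d])
  have im0: "Im (\<mu> * w0) = 0" unfolding mw by simp
  have ph: "phi \<nu> \<mu> x = (vector [Re z1, Im z1, 0], cmod w0)"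
    unfolding phi_def wf im0 using R(2) by (simp only: x_def)
  have cz: "Cz1 (phi \<nu> \<mu> x) = z1" using PP(1) R(2) by (simp add: x_def)
  have v1: "phi \<nu> \<mu> x \<in> V1"
    unfolding V1_def using cz z1d w0d w00 by (simp add: ph vector_3)
  have "Cd \<mu> (phi \<nu> \<mu> x) = z1 - z2"
    unfolding Cd_def PP(1,2) wf w0_def using R moeb_inv[OF z1d z2d] by (simp add: x_def)
  then have "phi \<nu> \<mu> x \<in> V0 \<nu> \<mu>" unfolding V0_def mem_Collect_eq using v1 s by metis
  then show ?thesis using n m x3 unfolding x_def by blast
qed

lemma chart:
  assumes x: "x \<in> symG - royal"
  shows "\<exists>U W J (\<phi> :: complex \<times> complex \<Rightarrow> (real^3) \<times> real) \<psi>.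
      open U \<and> x \<in> U \<and> U \<subseteq> symG - royal \<and>
      open W \<and> connected W \<and> open J \<and>
      \<phi> ` U = W \<times> J \<and> \<psi> ` (W \<times> J) = U \<and>
      (\<forall>u\<in>U. \<psi> (\<phi> u) = u) \<and> (\<forall>v\<in>W \<times> J. \<phi> (\<psi> v) = v) \<and>
      smooth_on U \<phi> \<and> smooth_on (W \<times> J) \<psi> \<and>
      (\<forall>u\<in>U. snd (\<phi> u) = qmap u)"
proof -
  obtain z1 z2 where z: "z1 \<in> unit_disc" "z2 \<in> unit_disc" "z1 \<noteq> z2" "x = (z1 + z2, z1 * z2)"
    using x unfolding symG_iff by blast
  obtain \<nu> \<mu> where n: "cmod \<nu> = 1" and m: "cmod \<mu> = 1" and x3: "x \<in> O3 \<nu> \<mu>"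
    and v0: "phi \<nu> \<mu> x \<in> V0 \<nu> \<mu>"
    using base_point[OF z(1-3)] z(4) by blast
  define v where "v = phi \<nu> \<mu> x"
  obtain e where e: "e > 0" "ball v e \<subseteq> V0 \<nu> \<mu>"
    using open_V0[OF m] v0 v_def by (meson open_contains_ball)
  define W where "W = ball (fst v) (e/2)"
  define J where "J = ball (snd v) (e/2)"
  have WJ: "W \<times> J \<subseteq> V0 \<nu> \<mu>"
  proof
    fix y assume "y \<in> W \<times> J"
    then have "dist (fst y) (fst v) < e/2" "dist (snd y) (snd v) < e/2"
      by (auto simp: W_def J_def dist_commute mem_Times_iff)
    then have "(dist (fst y) (fst v))\<^sup>2 < (e/2)\<^sup>2" "(dist (snd y) (snd v))\<^sup>2 < (e/2)\<^sup>2"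
      by (auto intro!: power_strict_mono)
    then have "(dist (fst y) (fst v))\<^sup>2 + (dist (snd y) (snd v))\<^sup>2 < e\<^sup>2"
      apply (simp add: power_divide)
      using zero_le_power2[of "dist (fst y) (fst v)"] zero_le_power2[of "dist (snd y) (snd v)"] by linarith
    then have "sqrt ((dist (fst y) (fst v))\<^sup>2 + (dist (snd y) (snd v))\<^sup>2) < sqrt (e\<^sup>2)"
      by (rule real_sqrt_less_mono)
    then have "dist y v < e"
      using e(1) by (metis dist_Pair_Pair prod.collapse real_sqrt_abs abs_of_pos)
    then show "y \<in> V0 \<nu> \<mu>" using e(2) by (auto simp: dist_commute)
  qed
  have vWJ: "v \<in> W \<times> J" using e(1) by (simp add: W_def J_def mem_Times_iff)
  define U where "U = phi \<nu> \<mu> -` (W \<times> J) \<inter> O3 \<nu> \<mu>"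
  have cphi: "continuous_on (O3 \<nu> \<mu>) (phi \<nu> \<mu>)" by (rule smooth_cont[OF smooth_phi])
  have oU: "open U" unfolding U_def
    using continuous_on_open_vimage[OF open_O3, THEN iffD1, OF cphi] by (simp add: W_def J_def open_Times)
  have xU: "x \<in> U" unfolding U_def using x3 vWJ v_def by simp
  have UG: "U \<subseteq> symG - royal" unfolding U_def using O2_sub[OF n] by (auto simp: O3_def)
  have PP: "\<forall>u\<in>U. psi \<mu> (phi \<nu> \<mu> u) = u" using psi_phi(3)[OF n m] by (auto simp: U_def)
  have QQ: "\<forall>y\<in>W \<times> J. phi \<nu> \<mu> (psi \<mu> y) = y" using phi_psi(2)[OF n m] WJ by blast
  have psiU: "psi \<mu> y \<in> U" if "y \<in> W \<times> J" for y
    using phi_psi[OF n m] WJ that unfolding U_def by auto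
  have im1: "phi \<nu> \<mu> ` U = W \<times> J"
  proof
    show "phi \<nu> \<mu> ` U \<subseteq> W \<times> J" by (auto simp: U_def)
    show "W \<times> J \<subseteq> phi \<nu> \<mu> ` U" using QQ psiU by (metis image_eqI subsetI)
  qed
  have im2: "psi \<mu> ` (W \<times> J) = U"
  proof
    show "psi \<mu> ` (W \<times> J) \<subseteq> U" using psiU by auto
    show "U \<subseteq> psi \<mu> ` (W \<times> J)" using PP im1 by (metis image_eqI subsetI imageI)
  qed
  have s1: "smooth_on U (phi \<nu> \<mu>)" by (rule smooth_mono[OF smooth_phi]) (auto simp: U_def)
  have s2: "smooth_on (W \<times> J) (psi \<mu>)" by (rule smooth_mono[OF smooth_psi[OF m]]) (use WJ in \<open>auto simp: V0_def\<close>)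
  have q: "\<forall>u\<in>U. snd (phi \<nu> \<mu> u) = qmap u"
    using O2_qmap[OF n] by (auto simp: U_def O3_def phi_def)
  show ?thesis
    apply (rule exI[of _ U], rule exI[of _ W], rule exI[of _ J], rule exI[of _ "phi \<nu> \<mu>"], rule exI[of _ "psi \<mu>"])
    using oU xU UG im1 im2 PP QQ s1 s2 q by (auto simp: W_def J_def)
qed

definition Dd :: "complex \<times> complex \<Rightarrow> real" where
  "Dd u = sqrt ((Re (zeta u))\<^sup>2 + (Im (zeta u))\<^sup>2)"
definition Ef :: "complex \<times> complex \<Rightarrow> real" where
  "Ef u = 1 + ((Re (snd u))\<^sup>2 + (Im (snd u))\<^sup>2) - ((Re (fst u))\<^sup>2 + (Im (fst u))\<^sup>2) / 2 + Dd u / 2"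
definition Qf :: "complex \<times> complex \<Rightarrow> real" where
  "Qf u = sqrt (Dd u / Ef u)"

lemma Qf_eq:
  assumes z1: "z1 \<in> unit_disc" and z2: "z2 \<in> unit_disc" and ne: "z1 \<noteq> z2"
  shows "qmap (z1 + z2, z1 * z2) = Qf (z1 + z2, z1 * z2)" "Ef (z1 + z2, z1 * z2) > 0"
    "zeta (z1 + z2, z1 * z2) \<noteq> 0"
proof -
  let ?u = "(z1 + z2, z1 * z2)"
  have z1d: "cmod z1 < 1" and z2d: "cmod z2 < 1" using z1 z2 by (auto simp: in_disc)
  have ze: "zeta ?u = (z1 - z2)\<^sup>2" by (simp add: zeta_def power2_eq_square algebra_simps)
  show "zeta ?u \<noteq> 0" using ne ze by simp
  have "Dd ?u = cmod (zeta ?u)"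
    unfolding Dd_def cmod_power2[symmetric] by simp
  then have dd: "Dd ?u = (cmod (z1 - z2))\<^sup>2" by (simp add: ze norm_power)
  have "Ef ?u = 1 + (cmod (z1 * z2))\<^sup>2 - (cmod (z1 + z2))\<^sup>2 / 2 + (cmod (z1 - z2))\<^sup>2 / 2"
    unfolding Ef_def dd by (simp add: cmod_power2)
  also have "\<dots> = (cmod (1 - cnj z1 * z2))\<^sup>2"
    unfolding cmod_power2 by (simp add: power2_eq_square field_simps)
  finally have ef: "Ef ?u = (cmod (1 - cnj z1 * z2))\<^sup>2" .
  have den: "1 - cnj z1 * z2 \<noteq> 0" by (rule moeb_den[OF z1d z2d])
  show "Ef ?u > 0" unfolding ef using den by simp
  have "qmap ?u = cmod (z1 - z2) / cmod (1 - cnj z1 * z2)"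
    by (simp add: qmap_eq[OF z1 z2] moeb_def norm_divide)
  also have "\<dots> = sqrt ((cmod (z1 - z2))\<^sup>2 / (cmod (1 - cnj z1 * z2))\<^sup>2)"
    by (simp add: real_sqrt_divide)
  finally show "qmap ?u = Qf ?u" unfolding Qf_def dd ef .
qed

lemma open_G: "open (symG - royal)"
  unfolding open_subopen[of "symG - royal"]
proof
  fix x assume "x \<in> symG - royal"
  then obtain z1 z2 where z: "z1 \<in> unit_disc" "z2 \<in> unit_disc" "z1 \<noteq> z2" "x = (z1 + z2, z1 * z2)"
    unfolding symG_iff by blast
  obtain \<nu> \<mu> where n: "cmod \<nu> = 1" and x3: "x \<in> O3 \<nu> \<mu>"
    using base_point[OF z(1-3)] z(4) by blast
  show "\<exists>T. open T \<and> x \<in> T \<and> T \<subseteq> symG - royal"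
    using open_O2 O2_sub[OF n] x3 by (auto simp: O3_def)
qed

lemma Qf_props:
  assumes "x \<in> symG - royal"
  shows "qmap x = Qf x" "Ef x > 0" "zeta x \<noteq> 0"
  using assms Qf_eq unfolding symG_iff by auto

lemma smooth_qmap: "smooth_on (symG - royal) qmap"
proof (rule smooth_cong[OF open_G _ Qf_props(1)])
  let ?S = "symG - royal"
  have z: "smooth_on ?S zeta"
    unfolding zeta_def[abs_def]
    by (intro smooth_diff smooth_power smooth_mult smooth_const smooth_fst smooth_snd smooth_id)
  have d: "smooth_on ?S Dd"
    unfolding Dd_def[abs_def]
    by (intro smooth_sqrt open_G smooth_add smooth_power smooth_Re smooth_Im z)
      (use Qf_props(3) in \<open>auto intro: cpos\<close>)
  have e: "smooth_on ?S Ef"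
    unfolding Ef_def[abs_def] divide_inverse
    by (intro smooth_add smooth_diff smooth_mult smooth_power smooth_Re smooth_Im smooth_fst smooth_snd
        smooth_id smooth_const d)
  have dp: "Dd x > 0" if "x \<in> ?S" for x
    unfolding Dd_def using cpos[OF Qf_props(3)[OF that]] by simp
  show "smooth_on ?S Qf"
    unfolding Qf_def[abs_def] divide_inverse
    by (intro smooth_sqrt open_G smooth_mult d smooth_inverse e)
      (use Qf_props(2) dp in auto)
qed

lemma qmap_deriv:
  assumes x: "x \<in> symG - royal"
  shows "\<exists>D. (qmap has_derivative D) (at x)"
proof -
  have ep: "Ef x > 0" and zn: "zeta x \<noteq> 0" using Qf_props[OF x] by auto
  have cp: "0 < (Re (zeta x))\<^sup>2 + (Im (zeta x))\<^sup>2" using cpos[OF zn] .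
  have dp: "Dd x > 0" unfolding Dd_def using cp by simp
  have "\<exists>D. (Qf has_derivative D) (at x)"
    unfolding Qf_def Dd_def Ef_def zeta_def
    apply (rule exI)
    apply (insert cp dp ep) unfolding Dd_def Ef_def zeta_def
    apply (rule has_derivative_real_sqrt has_derivative_divide has_derivative_add has_derivative_diff
        has_derivative_mult has_derivative_const has_derivative_Re has_derivative_Im has_derivative_fst
        has_derivative_snd has_derivative_ident has_derivative_power | simp)+
    done
  then obtain D where "(Qf has_derivative D) (at x)" by blast
  then have "(qmap has_derivative D) (at x)"
    by (rule has_derivative_transform_within_open[OF _ open_G x]) (use Qf_props in auto)
  then show ?thesis by blast
qed


lemma qmap_surj:
  assumes x: "x \<in> symG - royal" and D: "(qmap has_derivative D) (at x)"
  shows "surj D"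
proof -
  obtain z1 z2 where z: "z1 \<in> unit_disc" "z2 \<in> unit_disc" "z1 \<noteq> z2" "x = (z1 + z2, z1 * z2)"
    using x unfolding symG_iff by blast
  have z1d: "cmod z1 < 1" and z2d: "cmod z2 < 1" using z by (auto simp: in_disc)
  define w0 where "w0 = moeb z1 z2"
  define r0 where "r0 = cmod w0"
  have r0p: "r0 > 0" using moeb_zero_iff[OF z1d z2d] z(3) by (simp add: r0_def w0_def)
  have r01: "r0 < 1" using moeb_in[OF z1d z2d] by (simp add: r0_def w0_def)
  define g where "g t = (z1 + moeb z1 ((1 + t) *\<^sub>R w0), z1 * moeb z1 ((1 + t) *\<^sub>R w0))" for t :: real
  have g0: "g 0 = x" using moeb_inv[OF z1d z2d] by (simp add: g_def z(4) w0_def)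
  have den: "1 - cnj z1 * w0 \<noteq> 0" using moeb_den[OF z1d] moeb_in[OF z1d z2d] by (simp add: w0_def)
  have "\<exists>Dg. (g has_derivative Dg) (at 0)"
    unfolding g_def moeb_def
    apply (rule exI)
    apply (insert den)
    apply (rule has_derivative_Pair has_derivative_divide has_derivative_add has_derivative_diff
        has_derivative_mult has_derivative_const has_derivative_scaleR has_derivative_ident | simp)+
    done
  then obtain Dg where Dg: "(g has_derivative Dg) (at 0)" by blast
  have c: "((qmap \<circ> g) has_derivative (D \<circ> Dg)) (at 0)"
    using diff_chain_at[OF Dg] D g0 by simp
  define \<delta> where "\<delta> = min 1 (1 / r0 - 1)"
  have \<delta>: "\<delta> > 0" unfolding \<delta>_def using r0p r01 by (simp add: field_simps)
  have eq: "(qmap \<circ> g) t = r0 + r0 * t" if "t \<in> ball 0 \<delta>" for t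
  proof -
    have t1: "\<bar>t\<bar> < 1" "\<bar>t\<bar> < 1 / r0 - 1" using that by (auto simp: \<delta>_def)
    have tp: "1 + t > 0" using t1 by linarith
    have "(1 + t) * r0 < (1 / r0) * r0"
      using t1 r0p by (intro mult_strict_right_mono) linarith+
    then have wt: "cmod ((1 + t) *\<^sub>R w0) < 1" using r0p tp by (simp add: r0_def)
    have "(qmap \<circ> g) t = cmod (moeb z1 (moeb z1 ((1 + t) *\<^sub>R w0)))"
      unfolding g_def o_def
      by (rule qmap_eq) (use z(1) moeb_in[OF z1d wt] in \<open>auto simp: in_disc\<close>)
    also have "\<dots> = (1 + t) * r0" using moeb_inv[OF z1d wt] tp by (simp add: r0_def)
    finally show ?thesis by (simp add: algebra_simps)
  qed
  have c2: "((\<lambda>t. r0 + r0 * t) has_derivative (D \<circ> Dg)) (at 0)"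
    by (rule has_derivative_transform_within_open[OF c open_ball[of 0 \<delta>]]) (use \<delta> eq in auto)
  have c3: "((\<lambda>t. r0 + r0 * t) has_derivative (\<lambda>h. r0 * h)) (at 0)"
    by (auto intro!: derivative_eq_intros)
  have "D \<circ> Dg = (\<lambda>h. r0 * h)" by (rule has_derivative_unique[OF c2 c3])
  then have d1: "D (Dg 1) = r0" by (metis comp_apply mult_1_right)
  have lin: "linear D" using has_derivative_bounded_linear[OF D] bounded_linear.linear by blast
  show "surj D"
  proof (rule surjI)
    fix y :: real
    show "D ((y / r0) *\<^sub>R Dg 1) = y"
      using linear_cmul[OF lin] d1 r0p by simp
  qed
qed

lemma leaf_chart:
  assumes a: "a \<in> {0<..<1::real}" and x: "x \<in> (symG - royal) \<inter> qmap -` {a}"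
  shows "\<exists>U. openin (top_of_set ((symG - royal) \<inter> qmap -` {a})) U \<and> x \<in> U \<and>
          (\<exists>V :: (real^3) set. open V \<and> U homeomorphic V)"
proof -
  let ?L = "(symG - royal) \<inter> qmap -` {a}"
  obtain U W J and \<phi> :: "complex \<times> complex \<Rightarrow> (real^3) \<times> real" and \<psi> where
    c: "open U" "x \<in> U" "U \<subseteq> symG - royal" "open W" "connected W" "open J"
      "\<phi> ` U = W \<times> J" "\<psi> ` (W \<times> J) = U" "\<forall>u\<in>U. \<psi> (\<phi> u) = u" "\<forall>v\<in>W \<times> J. \<phi> (\<psi> v) = v"
      "smooth_on U \<phi>" "smooth_on (W \<times> J) \<psi>" "\<forall>u\<in>U. snd (\<phi> u) = qmap u"
    using chart[of x] x by blast
  have aJ: "a \<in> J" using c(2,7,13) x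
    by (metis IntD2 imageI mem_Times_iff singletonD vimageE)
  let ?U = "?L \<inter> U"
  have "openin (top_of_set ?L) ?U" using c(1) by (rule openin_open_Int)
  moreover have "x \<in> ?U" using x c(2) by simp
  moreover have "?U homeomorphic W"
  proof (rule homeomorphicI[where f = "\<lambda>u. fst (\<phi> u)" and g = "\<lambda>w. \<psi> (w, a)"])
    have pw: "\<psi> (w, a) \<in> ?U" "\<phi> (\<psi> (w, a)) = (w, a)" if "w \<in> W" for w
    proof -
      have wa: "(w, a) \<in> W \<times> J" using that aJ by simp
      show e: "\<phi> (\<psi> (w, a)) = (w, a)" using c(10) wa by blast
      have u: "\<psi> (w, a) \<in> U" using c(8) wa by blast
      then have "qmap (\<psi> (w, a)) = a" using c(13) e by (metis snd_conv)
      moreover have "\<psi> (w, a) \<in> symG - royal" using u c(3) by blast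
      ultimately show "\<psi> (w, a) \<in> ?U" using u by simp
    qed
    have fu: "\<phi> u = (fst (\<phi> u), a)" if "u \<in> ?U" for u
      using that c(13) by (metis IntD1 IntD2 prod.collapse singletonD vimageE)
    show "(\<lambda>u. fst (\<phi> u)) ` ?U = W"
    proof
      show "(\<lambda>u. fst (\<phi> u)) ` ?U \<subseteq> W"
      proof (rule image_subsetI)
        fix u assume "u \<in> ?U"
        then have "\<phi> u \<in> W \<times> J" using c(7) by blast
        then show "fst (\<phi> u) \<in> W" by (simp add: mem_Times_iff)
      qed
      show "W \<subseteq> (\<lambda>u. fst (\<phi> u)) ` ?U"
      proof
        fix w assume w: "w \<in> W"
        show "w \<in> (\<lambda>u. fst (\<phi> u)) ` ?U"
          by (rule rev_image_eqI[OF pw(1)[OF w]]) (simp add: pw(2)[OF w])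
      qed
    qed
    show "(\<lambda>w. \<psi> (w, a)) ` W = ?U"
    proof
      show "(\<lambda>w. \<psi> (w, a)) ` W \<subseteq> ?U" using pw(1) by (rule image_subsetI)
      show "?U \<subseteq> (\<lambda>w. \<psi> (w, a)) ` W"
      proof
        fix u assume u: "u \<in> ?U"
        then have e1: "\<psi> (fst (\<phi> u), a) = u" using fu c(9) by (metis IntD2)
        have "\<phi> u \<in> W \<times> J" using c(7) u by blast
        then have e2: "fst (\<phi> u) \<in> W" by (simp add: mem_Times_iff)
        show "u \<in> (\<lambda>w. \<psi> (w, a)) ` W" by (rule image_eqI[where f="\<lambda>w. \<psi> (w, a)", OF e1[symmetric] e2])
      qed
    qed
    show "continuous_on ?U (\<lambda>u. fst (\<phi> u))"
      by (intro continuous_on_fst continuous_on_subset[OF smooth_cont[OF c(11)]]) blast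
    show "continuous_on W (\<lambda>w. \<psi> (w, a))"
      by (rule continuous_on_compose2[OF smooth_cont[OF c(12)]]) (use aJ in \<open>auto intro!: continuous_intros\<close>)
    show "\<psi> (fst (\<phi> u), a) = u" if "u \<in> ?U" for u using that fu c(9) by (metis IntD2)
    show "fst (\<phi> (\<psi> (w, a))) = w" if "w \<in> W" for w using pw(2)[OF that] by simp
  qed
  ultimately show ?thesis using c(4) by (intro exI[of _ ?U] conjI exI[of _ W])
qed

lemma Fa_iff: "(z1, z2) \<in> Fa a \<longleftrightarrow> z1 \<in> unit_disc \<and> z2 \<in> unit_disc \<and> cmod (moeb z1 z2) = a"
  by (simp add: Fa_def)

lemma Fa_image:
  assumes a: "a \<in> {0<..<1::real}"
  shows "symm ` Fa a = (symG - royal) \<inter> qmap -` {a}"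
proof
  show "symm ` Fa a \<subseteq> (symG - royal) \<inter> qmap -` {a}"
  proof (rule image_subsetI)
    fix w assume w: "w \<in> Fa a"
    obtain z1 z2 where wz: "w = (z1, z2)" by (cases w)
    have d: "z1 \<in> unit_disc" "z2 \<in> unit_disc" "cmod (moeb z1 z2) = a"
      using w unfolding wz Fa_iff by blast+
    have "z1 \<noteq> z2"
    proof
      assume "z1 = z2" then have "moeb z1 z2 = 0" by (simp add: moeb_def)
      then show False using d(3) a by simp
    qed
    then have "(z1 + z2, z1 * z2) \<in> symG - royal" using d unfolding symG_iff
      by (intro exI[of _ z1] exI[of _ z2]) simp
    moreover have "qmap (z1 + z2, z1 * z2) = a" using qmap_eq[OF d(1,2)] d(3) by simp
    ultimately show "symm w \<in> (symG - royal) \<inter> qmap -` {a}"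
      unfolding wz symm_def by simp
  qed
  show "(symG - royal) \<inter> qmap -` {a} \<subseteq> symm ` Fa a"
  proof
    fix y assume y: "y \<in> (symG - royal) \<inter> qmap -` {a}"
    then have "y \<in> symG - royal" by blast
    then obtain z1 z2 where z: "z1 \<in> unit_disc" "z2 \<in> unit_disc" "y = (z1 + z2, z1 * z2)"
      unfolding symG_iff by blast
    have "qmap y = a" using y by simp
    then have "cmod (moeb z1 z2) = a" using qmap_eq[OF z(1,2)] z(3) by simp
    then have "(z1, z2) \<in> Fa a" using z(1,2) unfolding Fa_iff by blast
    moreover have "y = symm (z1, z2)" using z(3) by (simp add: symm_def)
    ultimately show "y \<in> symm ` Fa a" by (metis image_eqI)
  qed
qed

lemma Fa_quotient:
  assumes a: "a \<in> {0<..<1::real}"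
  shows "quotient_map (top_of_set (Fa a)) (top_of_set ((symG - royal) \<inter> qmap -` {a})) symm"
proof -
  let ?L = "(symG - royal) \<inter> qmap -` {a}"
  have csymm: "continuous_on UNIV symm" unfolding symm_def by (intro continuous_intros)
  have fa_L: "symm w \<in> ?L" if "w \<in> Fa a" for w
  proof -
    have "symm w \<in> symm ` Fa a" using that by (rule imageI)
    then show ?thesis by (simp only: Fa_image[OF a])
  qed
  show ?thesis
    unfolding quotient_map_def topspace_euclidean_subtopology
  proof (intro conjI allI impI)
    show "symm ` Fa a = ?L" by (rule Fa_image[OF a])
    fix U assume UL: "U \<subseteq> ?L"
    show "openin (top_of_set (Fa a)) {x \<in> Fa a. symm x \<in> U} = openin (top_of_set ?L) U"
    proof
      assume "openin (top_of_set ?L) U"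
      then obtain T where T: "open T" "U = ?L \<inter> T" by (auto simp: openin_open)
      have "{x \<in> Fa a. symm x \<in> U} = Fa a \<inter> (symm -` T)"
      proof (intro set_eqI iffI)
        fix w assume "w \<in> {x \<in> Fa a. symm x \<in> U}"
        then show "w \<in> Fa a \<inter> (symm -` T)" unfolding T(2) by simp
      next
        fix w assume w: "w \<in> Fa a \<inter> (symm -` T)"
        then have "symm w \<in> ?L" using fa_L by blast
        then show "w \<in> {x \<in> Fa a. symm x \<in> U}" using w unfolding T(2) by simp
      qed
      moreover have "open (symm -` T)"
        using continuous_on_open_vimage[OF open_UNIV, THEN iffD1, OF csymm] T(1) by simp
      ultimately show "openin (top_of_set (Fa a)) {x \<in> Fa a. symm x \<in> U}" by (simp add: openin_open_Int)
    next
      assume "openin (top_of_set (Fa a)) {x \<in> Fa a. symm x \<in> U}"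
      then obtain T where T: "open T" "{x \<in> Fa a. symm x \<in> U} = Fa a \<inter> T" by (auto simp: openin_open)
      show "openin (top_of_set ?L) U"
        unfolding openin_subopen[of _ U]
      proof
        fix y assume yU: "y \<in> U"
        then have yL: "y \<in> ?L" using UL by (rule subsetD[rotated])
        then have "y \<in> symG - royal" by blast
        then obtain z1 z2 where z: "z1 \<in> unit_disc" "z2 \<in> unit_disc" "z1 \<noteq> z2" "y = (z1 + z2, z1 * z2)"
          unfolding symG_iff by blast
        obtain \<nu> \<mu> where n: "cmod \<nu> = 1" and y3: "y \<in> O3 \<nu> \<mu>"
          using base_point[OF z(1-3)] z(4) by blast
        have y2: "y \<in> O2 \<nu>" using y3 by (simp add: O3_def)
        define \<sigma> where "\<sigma> u = (Z1 \<nu> u, Z2 \<nu> u)" for u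
        have cs: "continuous_on (O2 \<nu>) \<sigma>" unfolding \<sigma>_def
          by (intro continuous_intros continuous_on_subset[OF smooth_cont[OF smooth_Z1]]
              continuous_on_subset[OF smooth_cont[OF smooth_Z2]]) (auto simp: O2_def)
        have sig: "\<sigma> u \<in> Fa a" "symm (\<sigma> u) = u" if "u \<in> O2 \<nu>" "u \<in> ?L" for u
        proof -
          show "symm (\<sigma> u) = u" using O2_props(1)[OF n that(1)] by (simp add: symm_def \<sigma>_def)
          have "qmap u = a" using that(2) by simp
          then have "cmod (moeb (Z1 \<nu> u) (Z2 \<nu> u)) = a" using O2_qmap[OF n that(1)] by (simp add: Wf_def)
          then show "\<sigma> u \<in> Fa a" unfolding \<sigma>_def Fa_iff using O2_props(3,4)[OF n that(1)] by blast
        qed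
        define N where "N = \<sigma> -` T \<inter> O2 \<nu>"
        have oN: "open N" unfolding N_def
          using continuous_on_open_vimage[OF open_O2, THEN iffD1, OF cs] T(1) by blast
        have "\<sigma> y \<in> {x \<in> Fa a. symm x \<in> U}" using sig[OF y2 yL] yU by simp
        then have "\<sigma> y \<in> T" unfolding T(2) by simp
        then have yN: "y \<in> N" using y2 by (simp add: N_def)
        have sub: "?L \<inter> N \<subseteq> U"
        proof
          fix u assume u: "u \<in> ?L \<inter> N"
          have u2: "u \<in> O2 \<nu>" and uT: "\<sigma> u \<in> T" using u by (auto simp: N_def)
          have uL: "u \<in> ?L" using u by blast
          have "\<sigma> u \<in> Fa a \<inter> T" using sig(1)[OF u2 uL] uT by blast
          then have "\<sigma> u \<in> {x \<in> Fa a. symm x \<in> U}" unfolding T(2) .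
          then have "symm (\<sigma> u) \<in> U" by simp
          then show "u \<in> U" using sig(2)[OF u2 uL] by simp
        qed
        show "\<exists>T. openin (top_of_set ?L) T \<and> y \<in> T \<and> T \<subseteq> U"
        proof (intro exI conjI)
          show "openin (top_of_set ?L) (?L \<inter> N)" using oN by (rule openin_open_Int)
          show "y \<in> ?L \<inter> N" using yN yL by blast
          show "?L \<inter> N \<subseteq> U" by (rule sub)
        qed
      qed
    qed
  qed
qed


lemma qmap_image: "qmap ` (symG - royal) = {0<..<1}"
proof
  show "qmap ` (symG - royal) \<subseteq> {0<..<1}"
  proof (rule image_subsetI)
    fix x assume "x \<in> symG - royal"
    then obtain z1 z2 where z: "z1 \<in> unit_disc" "z2 \<in> unit_disc" "z1 \<noteq> z2" "x = (z1 + z2, z1 * z2)"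
      unfolding symG_iff by blast
    have z1d: "cmod z1 < 1" and z2d: "cmod z2 < 1" using z by (auto simp: in_disc)
    have "moeb z1 z2 \<noteq> 0" using moeb_zero_iff[OF z1d z2d] z(3) by simp
    moreover have "cmod (moeb z1 z2) < 1" by (rule moeb_in[OF z1d z2d])
    ultimately show "qmap x \<in> {0<..<1}" using qmap_eq[OF z(1,2)] z(4) by simp
  qed
  show "{0<..<1} \<subseteq> qmap ` (symG - royal)"
  proof
    fix a :: real assume a: "a \<in> {0<..<1}"
    have d: "0 \<in> unit_disc" "complex_of_real a \<in> unit_disc" using a by (auto simp: in_disc)
    have ne: "0 \<noteq> complex_of_real a" using a by simp
    have "(0 + complex_of_real a, 0 * complex_of_real a) \<in> symG - royal"
      unfolding symG_iff using d ne by (intro exI[of _ 0] exI[of _ "complex_of_real a"]) simp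
    moreover have "qmap (0 + complex_of_real a, 0 * complex_of_real a) = a"
      using qmap_eq[OF d] a by (simp add: moeb_def)
    ultimately show "a \<in> qmap ` (symG - royal)" by (metis image_eqI)
  qed
qed

theorem theorem2p6:
  shows "(
  qmap ` (symG - royal) \<subseteq> {0<..<1} \<and>
   smooth_on (symG - royal) qmap \<and>
   (\<forall>x \<in> symG - royal. \<exists>q'. (qmap has_derivative q') (at x) \<and> surj q')) \<and> (
  open (symG - royal) \<and> qmap ` (symG - royal) = {0<..<1} \<and>
   (\<forall>x \<in> symG - royal. \<exists>U W J (\<phi> :: complex \<times> complex \<Rightarrow> (real^3) \<times> real) \<psi>.
      open U \<and> x \<in> U \<and> U \<subseteq> symG - royal \<and>
      open W \<and> connected W \<and> open J \<and>
      \<phi> ` U = W \<times> J \<and> \<psi> ` (W \<times> J) = U \<and>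
      (\<forall>u\<in>U. \<psi> (\<phi> u) = u) \<and> (\<forall>v\<in>W \<times> J. \<phi> (\<psi> v) = v) \<and>
      smooth_on U \<phi> \<and> smooth_on (W \<times> J) \<psi> \<and>
      (\<forall>u\<in>U. snd (\<phi> u) = qmap u))) \<and> (
  \<forall>a \<in> {0<..<1::real}. \<forall>x \<in> (symG - royal) \<inter> qmap -` {a}.
      \<exists>U. openin (top_of_set ((symG - royal) \<inter> qmap -` {a})) U \<and> x \<in> U \<and>
          (\<exists>V :: (real^3) set. open V \<and> U homeomorphic V)) \<and> (
  \<forall>a \<in> {0<..<1::real}.
      (\<forall>z1 z2. (z1, z2) \<in> Fa a \<longrightarrow> (z2, z1) \<in> Fa a) \<and>
      symm ` Fa a = (symG - royal) \<inter> qmap -` {a} \<and>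
      (\<forall>w\<in>Fa a. \<forall>w'\<in>Fa a. symm w = symm w' \<longleftrightarrow> (w' = w \<or> w' = prod.swap w)) \<and>
      quotient_map (top_of_set (Fa a)) (top_of_set ((symG - royal) \<inter> qmap -` {a})) symm)"
proof (intro conjI ballI allI impI)
  show "qmap ` (symG - royal) \<subseteq> {0<..<1}" using qmap_image by simp
  show "smooth_on (symG - royal) qmap" by (rule smooth_qmap)
  show "\<exists>q'. (qmap has_derivative q') (at x) \<and> surj q'" if "x \<in> symG - royal" for x
    using qmap_deriv[OF that] qmap_surj[OF that] by blast
  show "open (symG - royal)" by (rule open_G)
  show "qmap ` (symG - royal) = {0<..<1}" by (rule qmap_image)
  show "\<exists>U W J (\<phi> :: complex \<times> complex \<Rightarrow> (real^3) \<times> real) \<psi>.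
      open U \<and> x \<in> U \<and> U \<subseteq> symG - royal \<and>
      open W \<and> connected W \<and> open J \<and>
      \<phi> ` U = W \<times> J \<and> \<psi> ` (W \<times> J) = U \<and>
      (\<forall>u\<in>U. \<psi> (\<phi> u) = u) \<and> (\<forall>v\<in>W \<times> J. \<phi> (\<psi> v) = v) \<and>
      smooth_on U \<phi> \<and> smooth_on (W \<times> J) \<psi> \<and>
      (\<forall>u\<in>U. snd (\<phi> u) = qmap u)" if "x \<in> symG - royal" for x
    by (rule chart[OF that])
  show "\<exists>U. openin (top_of_set ((symG - royal) \<inter> qmap -` {a})) U \<and> x \<in> U \<and>
          (\<exists>V :: (real^3) set. open V \<and> U homeomorphic V)"
    if "a \<in> {0<..<1::real}" "x \<in> (symG - royal) \<inter> qmap -` {a}" for a x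
    by (rule leaf_chart[OF that])
  fix a :: real assume a: "a \<in> {0<..<1}"
  show "(z2, z1) \<in> Fa a" if "(z1, z2) \<in> Fa a" for z1 z2
    using that cmod_moeb_swap[of z1 z2] unfolding Fa_iff by simp
  show "symm ` Fa a = (symG - royal) \<inter> qmap -` {a}" by (rule Fa_image[OF a])
  show "(symm w = symm w') = (w' = w \<or> w' = prod.swap w)" for w w'
  proof
    assume "symm w = symm w'"
    then have "fst w + snd w = fst w' + snd w'" "fst w * snd w = fst w' * snd w'"
      by (auto simp: symm_def)
    from vieta[OF this] show "w' = w \<or> w' = prod.swap w" by (cases w; cases w') auto
  next
    assume "w' = w \<or> w' = prod.swap w"
    then show "symm w = symm w'" by (cases w) (auto simp: symm_def algebra_simps)
  qed
  show "quotient_map (top_of_set (Fa a)) (top_of_set ((symG - royal) \<inter> qmap -` {a})) symm"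
    by (rule Fa_quotient[OF a])
qed

end
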